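(* Let $\mathcal{H}$ be a finite-dimensional Hilbert space and let $\Phi:\mathcal{B}(\mathcal{H})\to\mathcal{B}(\mathcal{H})$ be a unital quantum channel (completely positive, trace-preserving, with $\Phi(\mathbb{1})=\mathbb{1}$). Let $\rho_{\text{in}}=\sum_{i=1}^{r}p_i|p_i\rangle\langle p_i|$ be a density matrix on $\mathcal{H}$ of rank $r$, where $\{|p_i\rangle\}_{i=1}^r$ are orthonormal, $0<p_i\leq1$, $\sum_{i=1}^r p_i=1$, and let $\rho_{\text{out}}=\Phi(\rho_{\text{in}})$. Let $\Delta S\equiv S(\rho_{\text{out}})-S(\rho_{\text{in}})$ and $$L_{\text{otm}}\equiv-\ln\Big(\sum_{i=1}^{r}e^{-C(\Phi(|p_i\rangle\langle p_i|),\rho_{\text{out}})}\Big).$$ Then $\Delta S\geq L_{\text{otm}}\geq 0$.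
   Context: $\mathcal{B}(\mathcal{H})$ denotes the set of density matrices on $\mathcal{H}$ and $\mathbb{1}$ the identity on $\mathcal{H}$. $S(\rho)\equiv-\mathrm{Tr}[\rho\ln\rho]$ is the von Neumann entropy. $C(\rho_1,\rho_2)\equiv-\mathrm{Tr}[\rho_1\ln\rho_2]$ is the quantum cross entropy of $\rho_1$ with respect to $\rho_2$; it is finite when $\mathrm{supp}(\rho_1)\subseteq\mathrm{supp}(\rho_2)$ (with $\ln\rho_2$ taken on the support of $\rho_2$) and $+\infty$ otherwise. *)

theory Defs
  imports Complex_Main "HOL-Library.Extended_Real" "Jordan_Normal_Form.Matrix"
begin

text \<open>Operators on the n-dimensional Hilbert space C^n are complex n x n matrices.\<close>

definition mtrace :: "complex mat \<Rightarrow> complex" where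
  "mtrace A = (\<Sum>i<dim_row A. A $$ (i, i))"

definition adj :: "complex mat \<Rightarrow> complex mat" where
  "adj A = mat (dim_col A) (dim_row A) (\<lambda>(i, j). cnj (A $$ (j, i)))"

definition cinner :: "complex vec \<Rightarrow> complex vec \<Rightarrow> complex" where
  "cinner v w = (\<Sum>i<dim_vec v. cnj (v $ i) * w $ i)"

definition hermitian :: "complex mat \<Rightarrow> bool" where
  "hermitian A \<longleftrightarrow> adj A = A"

definition psd :: "nat \<Rightarrow> complex mat \<Rightarrow> bool" where
  "psd n A \<longleftrightarrow> A \<in> carrier_mat n n \<and> hermitian A \<and>
     (\<forall>v \<in> carrier_vec n. 0 \<le> Re (cinner v (A *\<^sub>v v)))"

definition density_matrix :: "nat \<Rightarrow> complex mat \<Rightarrow> bool" where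
  "density_matrix n \<rho> \<longleftrightarrow> psd n \<rho> \<and> mtrace \<rho> = 1"

definition unitary_mat :: "nat \<Rightarrow> complex mat \<Rightarrow> bool" where
  "unitary_mat n U \<longleftrightarrow> U \<in> carrier_mat n n \<and> adj U * U = 1\<^sub>m n"

definition rdiag :: "nat \<Rightarrow> (nat \<Rightarrow> real) \<Rightarrow> complex mat" where
  "rdiag n d = mat n n (\<lambda>(i, j). if i = j then complex_of_real (d i) else 0)"

definition mat_fun :: "nat \<Rightarrow> (real \<Rightarrow> real) \<Rightarrow> complex mat \<Rightarrow> complex mat" where
  "mat_fun n f A =
     (let (U, d) = (SOME (U, d). unitary_mat n U \<and> A = U * rdiag n d * adj U)
      in U * rdiag n (f \<circ> d) * adj U)"

definition ln_supp :: "real \<Rightarrow> real" where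
  "ln_supp x = (if x > 0 then ln x else 0)"

definition supp :: "complex mat \<Rightarrow> complex vec set" where
  "supp A = {A *\<^sub>v v | v. v \<in> carrier_vec (dim_col A)}"

definition vN_entropy :: "nat \<Rightarrow> complex mat \<Rightarrow> real" where
  "vN_entropy n \<rho> = - Re (mtrace (\<rho> * mat_fun n ln_supp \<rho>))"

definition cross_entropy :: "nat \<Rightarrow> complex mat \<Rightarrow> complex mat \<Rightarrow> ereal" where
  "cross_entropy n \<rho>1 \<rho>2 =
     (if supp \<rho>1 \<subseteq> supp \<rho>2 then ereal (- Re (mtrace (\<rho>1 * mat_fun n ln_supp \<rho>2))) else \<infinity>)"

definition exp_neg :: "ereal \<Rightarrow> real" where
  "exp_neg x = (case x of ereal y \<Rightarrow> exp (- y) | PInfty \<Rightarrow> 0 | MInfty \<Rightarrow> 0)"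

definition ketbra :: "complex vec \<Rightarrow> complex mat" where
  "ketbra v = mat (dim_vec v) (dim_vec v) (\<lambda>(i, j). v $ i * cnj (v $ j))"

text \<open>(id_k \<otimes> Phi) applied to a k n x k n matrix viewed as a k x k block matrix of n x n blocks.\<close>
definition ampliate :: "nat \<Rightarrow> nat \<Rightarrow> (complex mat \<Rightarrow> complex mat) \<Rightarrow> complex mat \<Rightarrow> complex mat" where
  "ampliate k n \<Phi> M = mat (k * n) (k * n) (\<lambda>(a, b).
      \<Phi> (mat n n (\<lambda>(i, j). M $$ ((a div n) * n + i, (b div n) * n + j))) $$ (a mod n, b mod n))"

definition linear_map :: "nat \<Rightarrow> (complex mat \<Rightarrow> complex mat) \<Rightarrow> bool" where
  "linear_map n \<Phi> \<longleftrightarrow>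
     (\<forall>A \<in> carrier_mat n n. \<Phi> A \<in> carrier_mat n n) \<and>
     (\<forall>A \<in> carrier_mat n n. \<forall>B \<in> carrier_mat n n. \<Phi> (A + B) = \<Phi> A + \<Phi> B) \<and>
     (\<forall>A \<in> carrier_mat n n. \<forall>c. \<Phi> (c \<cdot>\<^sub>m A) = c \<cdot>\<^sub>m \<Phi> A)"

definition completely_positive :: "nat \<Rightarrow> (complex mat \<Rightarrow> complex mat) \<Rightarrow> bool" where
  "completely_positive n \<Phi> \<longleftrightarrow>
     (\<forall>k. \<forall>M. psd (k * n) M \<longrightarrow> psd (k * n) (ampliate k n \<Phi> M))"

definition trace_preserving :: "nat \<Rightarrow> (complex mat \<Rightarrow> complex mat) \<Rightarrow> bool" where
  "trace_preserving n \<Phi> \<longleftrightarrow> (\<forall>A \<in> carrier_mat n n. mtrace (\<Phi> A) = mtrace A)"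

definition quantum_channel :: "nat \<Rightarrow> (complex mat \<Rightarrow> complex mat) \<Rightarrow> bool" where
  "quantum_channel n \<Phi> \<longleftrightarrow> linear_map n \<Phi> \<and> completely_positive n \<Phi> \<and> trace_preserving n \<Phi>"

definition unital :: "nat \<Rightarrow> (complex mat \<Rightarrow> complex mat) \<Rightarrow> bool" where
  "unital n \<Phi> \<longleftrightarrow> \<Phi> (1\<^sub>m n) = 1\<^sub>m n"

end

theory Submission
  imports Defs "Jordan_Normal_Form.Schur_Decomposition" "Jordan_Normal_Form.Spectral_Radius"
begin

lemma adj_dims[simp]: "dim_row (adj A) = dim_col A" "dim_col (adj A) = dim_row A"
  unfolding adj_def by simp_all
lemma adj_carrier[simp]: "A \<in> carrier_mat m n \<Longrightarrow> adj A \<in> carrier_mat n m"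
  unfolding carrier_mat_def by simp
lemma index_adj[simp]: "i < dim_col A \<Longrightarrow> j < dim_row A \<Longrightarrow> adj A $$ (i,j) = cnj (A $$ (j,i))"
  unfolding adj_def by simp

lemma adj_adj[simp]: "adj (adj A) = A"
  by (rule eq_matI) auto

lemma adj_mult: assumes "A \<in> carrier_mat m k" "B \<in> carrier_mat k n"
  shows "adj (A * B) = adj B * adj A"
  by (rule eq_matI) (use assms in \<open>auto simp: scalar_prod_def row_def col_def cnj_sum mult.commute\<close>)

lemma rdiag_carrier[simp]: "rdiag n d \<in> carrier_mat n n" by (simp add: rdiag_def)
lemma rdiag_dims[simp]: "dim_row (rdiag n d) = n" "dim_col (rdiag n d) = n" by (simp_all add: rdiag_def)

lemma unitary_right:
  assumes "unitary_mat n U" shows "U * adj U = 1\<^sub>m n"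
  using mat_mult_left_right_inverse[of "adj U" n U] assms unfolding unitary_mat_def by auto

lemma unitary_U1:
  assumes "unitary_mat n U" "k < n" "l < n"
  shows "(\<Sum>a<n. cnj (U $$ (a,k)) * U $$ (a,l)) = (if k = l then 1 else 0)"
proof -
  have U: "U \<in> carrier_mat n n" using assms unfolding unitary_mat_def by auto
  have "(adj U * U) $$ (k,l) = (if k = l then 1 else 0)"
    using assms unfolding unitary_mat_def by auto
  moreover have "(adj U * U) $$ (k,l) = (\<Sum>a<n. cnj (U $$ (a,k)) * U $$ (a,l))"
    using U assms by (auto simp: scalar_prod_def atLeast0LessThan)
  ultimately show ?thesis by simp
qed

lemma unitary_U2:
  assumes "unitary_mat n U" "a < n" "b < n"
  shows "(\<Sum>k<n. U $$ (a,k) * cnj (U $$ (b,k))) = (if a = b then 1 else 0)"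
proof -
  have U: "U \<in> carrier_mat n n" using assms unfolding unitary_mat_def by auto
  have "(U * adj U) $$ (a,b) = (if a = b then 1 else 0)"
    using unitary_right[OF assms(1)] assms by auto
  moreover have "(U * adj U) $$ (a,b) = (\<Sum>k<n. U $$ (a,k) * cnj (U $$ (b,k)))"
    using U assms by (auto simp: scalar_prod_def atLeast0LessThan)
  ultimately show ?thesis by simp
qed

lemma mult_entry:
  assumes "A \<in> carrier_mat m k" "B \<in> carrier_mat k n" "i < m" "j < n"
  shows "(A * B) $$ (i,j) = (\<Sum>l<k. A $$ (i,l) * B $$ (l,j))"
  using assms by (auto simp: scalar_prod_def atLeast0LessThan intro!: sum.cong)

lemma diag_entry:
  assumes U: "U \<in> carrier_mat n n" and ab: "a < n" "b < n"
  shows "(U * rdiag n d * adj U) $$ (a,b) = (\<Sum>k<n. U $$ (a,k) * d k * cnj (U $$ (b,k)))"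
proof -
  have 1: "(U * rdiag n d) $$ (a,k) = U $$ (a,k) * d k" if "k < n" for k
  proof -
    have "(U * rdiag n d) $$ (a,k) = (\<Sum>l<n. U $$ (a,l) * rdiag n d $$ (l,k))"
      using U ab that by (intro mult_entry) auto
    also have "\<dots> = (\<Sum>l<n. U $$ (a,l) * (if l = k then complex_of_real (d k) else 0))"
      using that by (intro sum.cong) (auto simp: rdiag_def)
    also have "\<dots> = U $$ (a,k) * d k" using that by (simp add: if_distrib cong: if_cong)
    finally show ?thesis .
  qed
  have "(U * rdiag n d * adj U) $$ (a,b) = (\<Sum>k<n. (U * rdiag n d) $$ (a,k) * adj U $$ (k,b))"
    using U ab by (intro mult_entry[of _ n n _ n]) auto
  also have "\<dots> = (\<Sum>k<n. U $$ (a,k) * d k * cnj (U $$ (b,k)))"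
    using U ab by (intro sum.cong refl) (subst 1, simp, subst index_adj, auto)
  finally show ?thesis .
qed

definition Qf :: "nat \<Rightarrow> complex mat \<Rightarrow> complex mat \<Rightarrow> nat \<Rightarrow> complex" where
  "Qf n U X k = (\<Sum>a<n. \<Sum>b<n. cnj (U $$ (a,k)) * X $$ (a,b) * U $$ (b,k))"

lemma trace_diag:
  assumes U: "U \<in> carrier_mat n n" and X: "X \<in> carrier_mat n n"
  shows "mtrace (X * (U * rdiag n d * adj U)) = (\<Sum>k<n. d k * Qf n U X k)"
proof -
  define M where "M = U * rdiag n d * adj U"
  have M: "M \<in> carrier_mat n n" using U unfolding M_def by auto
  have "mtrace (X * M) = (\<Sum>a<n. (X * M) $$ (a,a))"
    unfolding mtrace_def using X M by simp
  also have "\<dots> = (\<Sum>a<n. \<Sum>b<n. X $$ (a,b) * M $$ (b,a))"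
    using X M by (intro sum.cong refl mult_entry) auto
  also have "\<dots> = (\<Sum>a<n. \<Sum>b<n. X $$ (a,b) * (\<Sum>k<n. U $$ (b,k) * d k * cnj (U $$ (a,k))))"
    unfolding M_def by (intro sum.cong refl) (subst diag_entry[OF U], auto)
  finally have "mtrace (X * (U * rdiag n d * adj U)) = (\<Sum>a<n. \<Sum>b<n. X $$ (a,b) * (\<Sum>k<n. U $$ (b,k) * d k * cnj (U $$ (a,k))))"
    unfolding M_def .
  also have "\<dots> = (\<Sum>a<n. \<Sum>b<n. \<Sum>k<n. d k * (cnj (U $$ (a,k)) * X $$ (a,b) * U $$ (b,k)))"
    by (simp add: sum_distrib_left mult_ac)
  also have "\<dots> = (\<Sum>k<n. d k * Qf n U X k)"
    unfolding Qf_def sum_distrib_left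
  proof -
    have "(\<Sum>a<n. \<Sum>b<n. \<Sum>k<n. d k * (cnj (U $$ (a,k)) * X $$ (a,b) * U $$ (b,k))) =
          (\<Sum>a<n. \<Sum>k<n. \<Sum>b<n. d k * (cnj (U $$ (a,k)) * X $$ (a,b) * U $$ (b,k)))"
      by (rule sum.cong[OF refl], rule sum.swap)
    also have "\<dots> = (\<Sum>k<n. \<Sum>a<n. \<Sum>b<n. d k * (cnj (U $$ (a,k)) * X $$ (a,b) * U $$ (b,k)))"
      by (rule sum.swap)
    finally show "(\<Sum>a<n. \<Sum>b<n. \<Sum>k<n. d k * (cnj (U $$ (a,k)) * X $$ (a,b) * U $$ (b,k))) =
          (\<Sum>k<n. \<Sum>a<n. \<Sum>b<n. d k * (cnj (U $$ (a,k)) * X $$ (a,b) * U $$ (b,k)))" .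
  qed
  finally show ?thesis .
qed

lemma cscalar_self:
  assumes "x \<in> carrier_vec n"
  shows "x \<bullet>c x = complex_of_real (\<Sum>a<n. (cmod (x $ a))\<^sup>2)"
proof -
  have "x \<bullet>c x = (\<Sum>a<n. x $ a * cnj (x $ a))"
    using assms by (simp add: scalar_prod_def atLeast0LessThan)
  also have "\<dots> = (\<Sum>a<n. complex_of_real ((cmod (x $ a))\<^sup>2))"
    by (intro sum.cong refl) (rule complex_norm_square[symmetric])
  finally show ?thesis by (simp only: of_real_sum)
qed

lemma cinner_self:
  assumes "x \<in> carrier_vec n"
  shows "cinner x x = complex_of_real (\<Sum>a<n. (cmod (x $ a))\<^sup>2)"
proof -
  have "cinner x x = (\<Sum>a<n. x $ a * cnj (x $ a))"
    using assms unfolding cinner_def by (intro sum.cong) (auto simp: mult.commute)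
  also have "\<dots> = (\<Sum>a<n. complex_of_real ((cmod (x $ a))\<^sup>2))"
    by (intro sum.cong refl) (rule complex_norm_square[symmetric])
  finally show ?thesis by (simp only: of_real_sum)
qed

lemma extend_unitary:
  assumes u: "u \<in> carrier_vec n" and u1: "cinner u u = 1"
  shows "\<exists>W. unitary_mat n W \<and> (\<forall>a<n. W $$ (a,0) = u $ a)"
proof -
  have u0: "u \<noteq> 0\<^sub>v n"
  proof
    assume "u = 0\<^sub>v n"
    then have "cinner u u = 0" unfolding cinner_def by simp
    then show False using u1 by simp
  qed
  interpret cof_vec_space n "TYPE(complex)" .
  define b where "b = basis_completion u"
  from basis_completion[OF u u0, folded b_def]
  have dist_b: "distinct b" and indep: "\<not> lin_dep (set b)" and bc: "set b \<subseteq> carrier_vec n"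
    and hdb: "hd b = u" and len_b: "length b = n" by auto
  have n: "n > 0"
  proof (rule ccontr)
    assume "\<not> n > 0"
    then have "n = 0" by simp
    then show False using u u0 by auto
  qed
  from hdb len_b n obtain vs where bv: "b = u # vs" by (cases b, auto)
  define ws where "ws = gram_schmidt n b"
  from gram_schmidt_result[OF bc dist_b indep refl, folded ws_def]
  have ws: "set ws \<subseteq> carrier_vec n" "corthogonal ws" "length ws = n"
    by (auto simp: len_b)
  from gram_schmidt_hd[OF u, of vs, folded bv] have hdws: "hd ws = u" unfolding ws_def .
  have ws0: "ws ! 0 = u" using hdws n ws(3) by (cases ws) auto
  have wsc: "ws ! j \<in> carrier_vec n" if "j < n" for j using ws that by auto
  define s where "s j = sqrt (\<Sum>a<n. (cmod (ws ! j $ a))\<^sup>2)" for j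
  have sge: "s j \<ge> 0" for j unfolding s_def by (intro real_sqrt_ge_zero sum_nonneg) auto
  have cs: "ws ! j \<bullet>c ws ! j = complex_of_real ((s j)\<^sup>2)" if "j < n" for j
  proof -
    have "ws ! j \<bullet>c ws ! j = complex_of_real (\<Sum>a<n. (cmod (ws ! j $ a))\<^sup>2)"
      by (rule cscalar_self[OF wsc[OF that]])
    moreover have "(\<Sum>a<n. (cmod (ws ! j $ a))\<^sup>2) \<ge> 0" by (intro sum_nonneg) auto
    ultimately show ?thesis unfolding s_def by (simp only: real_sqrt_pow2)
  qed
  have spos: "s j > 0" if "j < n" for j
  proof -
    have "ws ! j \<bullet>c ws ! j \<noteq> 0" using corthogonalD[OF ws(2)] that ws(3) by auto
    then have "s j \<noteq> 0" using cs[OF that] by auto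
    moreover have "s j \<ge> 0" by (rule sge)
    ultimately show ?thesis by simp
  qed
  have s0: "s 0 = 1"
  proof -
    have "u \<bullet>c u = cnj (cinner u u)"
      using u unfolding cinner_def by (simp add: scalar_prod_def atLeast0LessThan)
    then have "complex_of_real ((s 0)\<^sup>2) = 1" using cs[OF n] ws0 u1 by simp
    then have "(s 0)\<^sup>2 = 1" by (metis of_real_eq_1_iff)
    then show ?thesis using sge[of 0] by (simp add: power2_eq_1_iff)
  qed
  define W where "W = mat n n (\<lambda>(a,j). ws ! j $ a / complex_of_real (s j))"
  have Wc: "W \<in> carrier_mat n n" unfolding W_def by simp
  have "adj W * W = 1\<^sub>m n"
  proof (rule eq_matI)
    fix j l assume jl: "j < dim_row (1\<^sub>m n)" "l < dim_col (1\<^sub>m n)"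
    then have j: "j < n" and l: "l < n" by auto
    have "(adj W * W) $$ (j,l) = (\<Sum>a<n. adj W $$ (j,a) * W $$ (a,l))"
      using Wc j l by (intro mult_entry[of _ n n]) auto
    also have "\<dots> = (\<Sum>a<n. ws ! l $ a * cnj (ws ! j $ a)) / (complex_of_real (s j) * complex_of_real (s l))"
      unfolding sum_divide_distrib using j l Wc by (intro sum.cong refl) (auto simp: W_def)
    also have "(\<Sum>a<n. ws ! l $ a * cnj (ws ! j $ a)) = ws ! l \<bullet>c ws ! j"
      using wsc[OF j] wsc[OF l] by (simp add: scalar_prod_def atLeast0LessThan)
    also have "(ws ! l \<bullet>c ws ! j) / (complex_of_real (s j) * complex_of_real (s l)) = 1\<^sub>m n $$ (j,l)"
    proof (cases "j = l")
      case True
      then show ?thesis using cs[OF j] spos[OF j] j by (simp add: power2_eq_square)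
    next
      case False
      then have "ws ! l \<bullet>c ws ! j = 0" using corthogonalD[OF ws(2)] j l ws(3) by auto
      then show ?thesis using False j l by simp
    qed
    finally show "(adj W * W) $$ (j,l) = 1\<^sub>m n $$ (j,l)" .
  qed (use Wc in auto)
  then have "unitary_mat n W" using Wc unfolding unitary_mat_def by simp
  moreover have "\<forall>a<n. W $$ (a,0) = u $ a" using n s0 ws0 unfolding W_def by simp
  ultimately show ?thesis by blast
qed

lemma triple_entry:
  assumes W: "W \<in> carrier_mat n n" and A: "A \<in> carrier_mat n n" and ij: "i < n" "j < n"
  shows "(adj W * A * W) $$ (i,j) = (\<Sum>a<n. \<Sum>b<n. cnj (W $$ (a,i)) * A $$ (a,b) * W $$ (b,j))"
proof -
  have "(adj W * A * W) $$ (i,j) = (\<Sum>b<n. (adj W * A) $$ (i,b) * W $$ (b,j))"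
    using W A ij by (intro mult_entry[of _ n n]) auto
  also have "\<dots> = (\<Sum>b<n. (\<Sum>a<n. cnj (W $$ (a,i)) * A $$ (a,b)) * W $$ (b,j))"
    using W A ij by (intro sum.cong refl) (subst mult_entry[of _ n n], auto)
  also have "\<dots> = (\<Sum>b<n. \<Sum>a<n. cnj (W $$ (a,i)) * A $$ (a,b) * W $$ (b,j))"
    by (simp add: sum_distrib_right)
  also have "\<dots> = (\<Sum>a<n. \<Sum>b<n. cnj (W $$ (a,i)) * A $$ (a,b) * W $$ (b,j))"
    by (rule sum.swap)
  finally show ?thesis .
qed

lemma hermitian_entry:
  assumes "hermitian A" "A \<in> carrier_mat n n" "i < n" "j < n"
  shows "A $$ (i,j) = cnj (A $$ (j,i))"
proof -
  have "adj A $$ (i,j) = A $$ (i,j)" using assms unfolding hermitian_def by simp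
  then show ?thesis using assms by simp
qed

lemma hermitianI:
  assumes "A \<in> carrier_mat n n" "\<And>i j. i < n \<Longrightarrow> j < n \<Longrightarrow> A $$ (i,j) = cnj (A $$ (j,i))"
  shows "hermitian A"
  unfolding hermitian_def
proof (rule eq_matI)
  fix i j assume "i < dim_row A" "j < dim_col A"
  then have "i < n" "j < n" using assms(1) by auto
  then show "adj A $$ (i,j) = A $$ (i,j)" using assms(1) assms(2)[of j i] by simp
qed (use assms(1) in auto)

lemma sq_mult_carrier[simp]: "A \<in> carrier_mat n n \<Longrightarrow> B \<in> carrier_mat n n \<Longrightarrow> A * B \<in> carrier_mat n n"
  by (rule mult_carrier_mat)

lemma sq_assoc: "A \<in> carrier_mat n n \<Longrightarrow> B \<in> carrier_mat n n \<Longrightarrow> C \<in> carrier_mat n n \<Longrightarrow> A * B * C = A * (B * C)"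
  by (rule assoc_mult_mat)

theorem spectral:
  assumes "A \<in> carrier_mat n n" "hermitian A"
  shows "\<exists>U d. unitary_mat n U \<and> A = U * rdiag n d * adj U"
  using assms
proof (induction n arbitrary: A)
  case 0
  have "unitary_mat 0 (1\<^sub>m 0)" unfolding unitary_mat_def by (auto intro!: eq_matI)
  moreover have "A = 1\<^sub>m 0 * rdiag 0 (\<lambda>_. 0) * adj (1\<^sub>m 0)" using 0 by (auto intro!: eq_matI)
  ultimately show ?case by blast
next
  case (Suc m)
  define n where "n = Suc m"
  have n0: "0 < n" using n_def by simp
  have A: "A \<in> carrier_mat n n" and hA: "hermitian A" using Suc n_def by auto
  obtain e where "e \<in> spectrum A" using spectrum_non_empty[OF A] n_def by auto
  then obtain v where "eigenvector A v e" unfolding spectrum_def eigenvalue_def by auto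
  then have v: "v \<in> carrier_vec n" and v0: "v \<noteq> 0\<^sub>v n" and Av: "A *\<^sub>v v = e \<cdot>\<^sub>v v"
    using A unfolding eigenvector_def by auto
  define nv where "nv = (\<Sum>a<n. (cmod (v $ a))\<^sup>2)"
  have cvv: "cinner v v = nv" unfolding nv_def by (rule cinner_self[OF v])
  have nvpos: "nv > 0"
  proof -
    have "v \<bullet>c v \<noteq> 0" using v v0 by simp
    moreover have "v \<bullet>c v = nv" unfolding nv_def by (rule cscalar_self[OF v])
    moreover have "nv \<ge> 0" unfolding nv_def by (intro sum_nonneg) auto
    ultimately show ?thesis by auto
  qed
  define u where "u = complex_of_real (1 / sqrt nv) \<cdot>\<^sub>v v"
  have u: "u \<in> carrier_vec n" unfolding u_def using v by simp
  have cuu: "cinner u u = 1"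
  proof -
    have "cinner u u = (\<Sum>a<n. cnj (complex_of_real (1 / sqrt nv)) * cnj (v $ a) * (complex_of_real (1 / sqrt nv) * v $ a))"
      unfolding cinner_def u_def using v by (intro sum.cong) auto
    also have "\<dots> = (\<Sum>a<n. complex_of_real (1 / sqrt nv * (1 / sqrt nv)) * (cnj (v $ a) * v $ a))"
      by (intro sum.cong refl) (simp only: complex_cnj_complex_of_real of_real_mult mult_ac)
    also have "\<dots> = complex_of_real (1 / sqrt nv * (1 / sqrt nv)) * cinner v v"
      unfolding cinner_def sum_distrib_left using v by simp
    also have "1 / sqrt nv * (1 / sqrt nv) = 1 / nv" using nvpos
      by (simp add: power2_eq_square[symmetric] power_divide)
    also have "complex_of_real (1 / nv) * cinner v v = 1" using cvv nvpos by simp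
    finally show ?thesis .
  qed
  have Au: "A *\<^sub>v u = e \<cdot>\<^sub>v u"
  proof -
    have "A *\<^sub>v u = complex_of_real (1 / sqrt nv) \<cdot>\<^sub>v (A *\<^sub>v v)" unfolding u_def by (rule mult_mat_vec[OF A v])
    also have "\<dots> = complex_of_real (1 / sqrt nv) \<cdot>\<^sub>v (e \<cdot>\<^sub>v v)" using Av by simp
    also have "\<dots> = e \<cdot>\<^sub>v u" unfolding u_def smult_smult_assoc by (simp add: mult.commute)
    finally show ?thesis .
  qed
  have Au_entry: "(\<Sum>b<n. A $$ (a,b) * u $ b) = e * u $ a" if "a < n" for a
  proof -
    have "(A *\<^sub>v u) $ a = (\<Sum>b<n. A $$ (a,b) * u $ b)"
      using A u that by (simp add: scalar_prod_def atLeast0LessThan row_def)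
    then show ?thesis using Au that u by simp
  qed
  obtain W where W: "unitary_mat n W" and W0: "\<forall>a<n. W $$ (a,0) = u $ a"
    using extend_unitary[OF u cuu] by blast
  have Wc: "W \<in> carrier_mat n n" using W unfolding unitary_mat_def by simp
  define A' where "A' = adj W * A * W"
  have A'c: "A' \<in> carrier_mat n n" unfolding A'_def using Wc A by (meson adj_carrier mult_carrier_mat)
  have A'e: "A' $$ (i,j) = (\<Sum>a<n. \<Sum>b<n. cnj (W $$ (a,i)) * A $$ (a,b) * W $$ (b,j))"
    if "i < n" "j < n" for i j
    unfolding A'_def using triple_entry[OF Wc A that] .
  have A'h: "A' $$ (i,j) = cnj (A' $$ (j,i))" if "i < n" "j < n" for i j
  proof -
    have "cnj (A' $$ (j,i)) = (\<Sum>a<n. \<Sum>b<n. W $$ (a,j) * cnj (A $$ (a,b)) * cnj (W $$ (b,i)))"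
      using A'e[OF that(2,1)] by simp
    also have "\<dots> = (\<Sum>a<n. \<Sum>b<n. W $$ (a,j) * A $$ (b,a) * cnj (W $$ (b,i)))"
      by (intro sum.cong refl) (subst hermitian_entry[OF hA A], auto)
    also have "\<dots> = (\<Sum>b<n. \<Sum>a<n. W $$ (a,j) * A $$ (b,a) * cnj (W $$ (b,i)))"
      by (rule sum.swap)
    also have "\<dots> = A' $$ (i,j)" unfolding A'e[OF that] by (intro sum.cong refl) (simp add: mult_ac)
    finally show ?thesis by simp
  qed
  have A'0: "A' $$ (i,0) = (if i = 0 then e else 0)" if "i < n" for i
  proof -
    have "A' $$ (i,0) = (\<Sum>a<n. cnj (W $$ (a,i)) * (\<Sum>b<n. A $$ (a,b) * u $ b))"
      unfolding A'e[OF that n0] sum_distrib_left using W0 by (intro sum.cong refl) (auto simp: mult_ac)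
    also have "\<dots> = e * (\<Sum>a<n. cnj (W $$ (a,i)) * W $$ (a,0))"
    proof -
      have "(\<Sum>a<n. cnj (W $$ (a,i)) * (\<Sum>b<n. A $$ (a,b) * u $ b)) = (\<Sum>a<n. cnj (W $$ (a,i)) * (e * W $$ (a,0)))"
        using W0 Au_entry by (intro sum.cong refl) simp
      then show ?thesis by (simp add: sum_distrib_left mult_ac)
    qed
    also have "\<dots> = (if i = 0 then e else 0)"
      using unitary_U1[OF W that, of 0] n_def by simp
    finally show ?thesis .
  qed
  have e_real: "e = complex_of_real (Re e)"
  proof -
    have "e = cnj e" using A'h[of 0 0] A'0[of 0] n_def by simp
    then have "e \<in> \<real>" using Reals_cnj_iff by metis
    then show ?thesis by simp
  qed
  have A'0': "A' $$ (0,j) = (if j = 0 then e else 0)" if "j < n" for j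
  proof (cases "j = 0")
    case True
    then show ?thesis using A'0[OF that] by simp
  next
    case False
    then show ?thesis using A'h[of 0 j] A'0[OF that] that n_def by simp
  qed
  define C where "C = mat m m (\<lambda>(i,j). A' $$ (Suc i, Suc j))"
  have Cc: "C \<in> carrier_mat m m" unfolding C_def by simp
  have hC: "hermitian C"
  proof (rule hermitianI[OF Cc])
    fix i j assume "i < m" "j < m"
    then show "C $$ (i,j) = cnj (C $$ (j,i))" using A'h[of "Suc i" "Suc j"] n_def by (simp add: C_def)
  qed
  obtain V d' where V: "unitary_mat m V" and CV: "C = V * rdiag m d' * adj V"
    using Suc.IH[OF Cc hC] by blast
  have Vc: "V \<in> carrier_mat m m" using V unfolding unitary_mat_def by simp
  define Vh where "Vh = mat n n (\<lambda>(i,j). if i = 0 then (if j = 0 then 1 else 0) else if j = 0 then 0 else V $$ (i - 1, j - 1))"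
  have Vhc: "Vh \<in> carrier_mat n n" unfolding Vh_def by simp
  define d where "d k = (if k = 0 then Re e else d' (k - 1))" for k
  have VhVh: "adj Vh * Vh = 1\<^sub>m n"
  proof (rule eq_matI)
    fix j l assume "j < dim_row (1\<^sub>m n)" "l < dim_col (1\<^sub>m n)"
    then have j: "j < n" and l: "l < n" by auto
    have "(adj Vh * Vh) $$ (j,l) = (\<Sum>a<n. cnj (Vh $$ (a,j)) * Vh $$ (a,l))"
      using Vhc j l by (subst mult_entry[of _ n n]) auto
    also have "\<dots> = cnj (Vh $$ (0,j)) * Vh $$ (0,l) + (\<Sum>a<m. cnj (Vh $$ (Suc a,j)) * Vh $$ (Suc a,l))"
      unfolding n_def by (rule sum.lessThan_Suc_shift)
    also have "\<dots> = 1\<^sub>m n $$ (j,l)"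
    proof (cases "j = 0 \<or> l = 0")
      case True
      then show ?thesis using j l n_def by (auto simp: Vh_def)
    next
      case False
      then obtain j' l' where jj: "j = Suc j'" and ll: "l = Suc l'" by (meson not0_implies_Suc)
      then have "(\<Sum>a<m. cnj (Vh $$ (Suc a,j)) * Vh $$ (Suc a,l)) = (\<Sum>a<m. cnj (V $$ (a,j')) * V $$ (a,l'))"
        using j l n_def by (intro sum.cong refl) (auto simp: Vh_def)
      also have "\<dots> = (if j' = l' then 1 else 0)" using unitary_U1[OF V] j l jj ll n_def by simp
      finally show ?thesis using jj ll j l n_def by (simp add: Vh_def)
    qed
    finally show "(adj Vh * Vh) $$ (j,l) = 1\<^sub>m n $$ (j,l)" .
  qed (use Vhc in auto)
  have aW: "adj W \<in> carrier_mat n n" using Wc by simp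
  have aVh: "adj Vh \<in> carrier_mat n n" using Vhc by simp
  define U where "U = W * Vh"
  have Uc: "U \<in> carrier_mat n n" unfolding U_def using Wc Vhc by simp
  have "adj U * U = 1\<^sub>m n"
  proof -
    have "adj U * U = (adj Vh * adj W) * (W * Vh)" unfolding U_def using adj_mult[OF Wc Vhc] by simp
    also have "\<dots> = adj Vh * (adj W * (W * Vh))" by (rule sq_assoc[OF aVh aW sq_mult_carrier[OF Wc Vhc]])
    also have "adj W * (W * Vh) = (adj W * W) * Vh" by (rule sq_assoc[OF aW Wc Vhc, symmetric])
    also have "adj W * W * Vh = Vh" using W Vhc unfolding unitary_mat_def by simp
    also have "adj Vh * Vh = 1\<^sub>m n" by (rule VhVh)
    finally show ?thesis .
  qed
  then have U: "unitary_mat n U" using Uc unfolding unitary_mat_def by simp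
  have VA': "Vh * rdiag n d * adj Vh = A'"
  proof (rule eq_matI)
    fix i j assume "i < dim_row A'" "j < dim_col A'"
    then have i: "i < n" and j: "j < n" using A'c by auto
    have "(Vh * rdiag n d * adj Vh) $$ (i,j) = (\<Sum>k<n. Vh $$ (i,k) * d k * cnj (Vh $$ (j,k)))"
      by (rule diag_entry[OF Vhc i j])
    also have "\<dots> = Vh $$ (i,0) * d 0 * cnj (Vh $$ (j,0)) + (\<Sum>k<m. Vh $$ (i,Suc k) * d (Suc k) * cnj (Vh $$ (j,Suc k)))"
      unfolding n_def by (rule sum.lessThan_Suc_shift)
    also have "\<dots> = A' $$ (i,j)"
    proof (cases "i = 0 \<or> j = 0")
      case True
      then show ?thesis using i j n_def A'0 A'0' e_real by (auto simp: Vh_def d_def)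
    next
      case False
      then obtain i' j' where ii: "i = Suc i'" and jj: "j = Suc j'" by (meson not0_implies_Suc)
      then have "(\<Sum>k<m. Vh $$ (i,Suc k) * d (Suc k) * cnj (Vh $$ (j,Suc k))) = (\<Sum>k<m. V $$ (i',k) * d' k * cnj (V $$ (j',k)))"
        using i j n_def by (intro sum.cong refl) (auto simp: Vh_def d_def)
      also have "\<dots> = C $$ (i',j')" unfolding CV using i j ii jj n_def by (subst diag_entry[OF Vc]) auto
      also have "\<dots> = A' $$ (i,j)" using ii jj i j n_def by (simp add: C_def)
      finally show ?thesis using ii jj i j by (simp add: Vh_def)
    qed
    finally show "(Vh * rdiag n d * adj Vh) $$ (i,j) = A' $$ (i,j)" .
  qed (use Vhc A'c in auto)
  have WW: "W * adj W = 1\<^sub>m n" by (rule unitary_right[OF W])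
  have "U * rdiag n d * adj U = W * (Vh * rdiag n d * adj Vh) * adj W"
  proof -
    note R = rdiag_carrier[of n d]
    have "U * rdiag n d * adj U = W * Vh * rdiag n d * (adj Vh * adj W)"
      unfolding U_def using adj_mult[OF Wc Vhc] by simp
    also have "W * Vh * rdiag n d = W * (Vh * rdiag n d)" by (rule sq_assoc[OF Wc Vhc R])
    also have "W * (Vh * rdiag n d) * (adj Vh * adj W) = W * (Vh * rdiag n d * (adj Vh * adj W))"
      by (rule sq_assoc[OF Wc sq_mult_carrier[OF Vhc R] sq_mult_carrier[OF aVh aW]])
    also have "Vh * rdiag n d * (adj Vh * adj W) = Vh * rdiag n d * adj Vh * adj W"
      by (rule sq_assoc[OF sq_mult_carrier[OF Vhc R] aVh aW, symmetric])
    also have "W * (Vh * rdiag n d * adj Vh * adj W) = W * (Vh * rdiag n d * adj Vh) * adj W"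
      by (rule sq_assoc[OF Wc sq_mult_carrier[OF sq_mult_carrier[OF Vhc R] aVh] aW, symmetric])
    finally show ?thesis .
  qed
  also have "\<dots> = W * (adj W * A * W) * adj W" unfolding VA' A'_def ..
  also have "\<dots> = (W * adj W) * A * (W * adj W)"
  proof -
    have "W * (adj W * A * W) * adj W = W * (adj W * A * W * adj W)"
      by (rule sq_assoc[OF Wc sq_mult_carrier[OF sq_mult_carrier[OF aW A] Wc] aW])
    also have "adj W * A * W * adj W = adj W * A * (W * adj W)"
      by (rule sq_assoc[OF sq_mult_carrier[OF aW A] Wc aW])
    also have "W * (adj W * A * (W * adj W)) = W * (adj W * A) * (W * adj W)"
      by (rule sq_assoc[OF Wc sq_mult_carrier[OF aW A] sq_mult_carrier[OF Wc aW], symmetric])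
    also have "W * (adj W * A) = W * adj W * A"
      by (rule sq_assoc[OF Wc aW A, symmetric])
    finally show ?thesis .
  qed
  also have "\<dots> = A" unfolding WW using A by simp
  finally show ?case using U unfolding n_def by metis
qed

lemma mat_fun_spec:
  assumes "A \<in> carrier_mat n n" "hermitian A"
  shows "\<exists>U d. unitary_mat n U \<and> A = U * rdiag n d * adj U \<and> mat_fun n f A = U * rdiag n (f \<circ> d) * adj U"
proof -
  define P where "P = (\<lambda>(U, d). unitary_mat n U \<and> A = U * rdiag n d * adj U)"
  have ex: "\<exists>x. P x" using spectral[OF assms] unfolding P_def by auto
  obtain U d where Ud: "(SOME x. P x) = (U, d)" by (cases "SOME x. P x") auto
  have "P (U, d)" using someI_ex[OF ex] Ud by simp
  moreover have "mat_fun n f A = U * rdiag n (f \<circ> d) * adj U"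
    unfolding mat_fun_def P_def[symmetric] Ud by simp
  ultimately show ?thesis unfolding P_def by auto
qed

lemma Qf_trace:
  assumes U: "unitary_mat n U" and X: "X \<in> carrier_mat n n"
  shows "(\<Sum>k<n. Qf n U X k) = mtrace X"
proof -
  have "(\<Sum>k<n. Qf n U X k) = (\<Sum>k<n. \<Sum>a<n. \<Sum>b<n. X $$ (a,b) * (U $$ (b,k) * cnj (U $$ (a,k))))"
    unfolding Qf_def by (intro sum.cong refl) (simp add: mult_ac)
  also have "\<dots> = (\<Sum>a<n. \<Sum>k<n. \<Sum>b<n. X $$ (a,b) * (U $$ (b,k) * cnj (U $$ (a,k))))"
    by (rule sum.swap)
  also have "\<dots> = (\<Sum>a<n. \<Sum>b<n. \<Sum>k<n. X $$ (a,b) * (U $$ (b,k) * cnj (U $$ (a,k))))"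
    by (rule sum.cong[OF refl], rule sum.swap)
  also have "\<dots> = (\<Sum>a<n. \<Sum>b<n. X $$ (a,b) * (if b = a then 1 else 0))"
    by (intro sum.cong refl) (simp add: sum_distrib_left[symmetric] unitary_U2[OF U])
  also have "\<dots> = (\<Sum>a<n. X $$ (a,a))"
    by (intro sum.cong refl) (simp add: if_distrib cong: if_cong)
  also have "\<dots> = mtrace X" unfolding mtrace_def using X by simp
  finally show ?thesis .
qed

lemma Qf_self:
  assumes U: "unitary_mat n U" and k: "k < n"
  shows "Qf n U (U * rdiag n d * adj U) k = d k"
proof -
  have Uc: "U \<in> carrier_mat n n" using U unfolding unitary_mat_def by simp
  have "Qf n U (U * rdiag n d * adj U) k =
     (\<Sum>a<n. \<Sum>b<n. cnj (U $$ (a,k)) * (\<Sum>l<n. U $$ (a,l) * d l * cnj (U $$ (b,l))) * U $$ (b,k))"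
    unfolding Qf_def by (intro sum.cong refl) (simp add: diag_entry[OF Uc])
  also have "\<dots> = (\<Sum>a<n. \<Sum>b<n. \<Sum>l<n. d l * ((cnj (U $$ (a,k)) * U $$ (a,l)) * (cnj (U $$ (b,l)) * U $$ (b,k))))"
    by (simp add: sum_distrib_left sum_distrib_right mult_ac)
  also have "\<dots> = (\<Sum>a<n. \<Sum>l<n. \<Sum>b<n. d l * ((cnj (U $$ (a,k)) * U $$ (a,l)) * (cnj (U $$ (b,l)) * U $$ (b,k))))"
    by (rule sum.cong[OF refl], rule sum.swap)
  also have "\<dots> = (\<Sum>l<n. \<Sum>a<n. \<Sum>b<n. d l * ((cnj (U $$ (a,k)) * U $$ (a,l)) * (cnj (U $$ (b,l)) * U $$ (b,k))))"
    by (rule sum.swap)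
  also have "\<dots> = (\<Sum>l<n. d l * ((\<Sum>a<n. cnj (U $$ (a,k)) * U $$ (a,l)) * (\<Sum>b<n. cnj (U $$ (b,l)) * U $$ (b,k))))"
    by (intro sum.cong refl) (subst sum_product, simp add: sum_distrib_left)
  also have "\<dots> = (\<Sum>l<n. complex_of_real (d l) * ((if k = l then 1 else 0) * (if l = k then 1 else 0)))"
    using k by (intro sum.cong refl) (simp add: unitary_U1[OF U])
  also have "\<dots> = d k" using k by (simp add: if_distrib cong: if_cong)
  finally show ?thesis .
qed

lemma cinner_mat_vec:
  assumes X: "X \<in> carrier_mat n n" and x: "x \<in> carrier_vec n" and y: "y \<in> carrier_vec n"
  shows "cinner x (X *\<^sub>v y) = (\<Sum>a<n. \<Sum>b<n. cnj (x $ a) * X $$ (a,b) * y $ b)"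
  unfolding cinner_def using X x y
  by (auto simp: scalar_prod_def atLeast0LessThan sum_distrib_left mult_ac intro!: sum.cong)

lemma Qf_cinner:
  assumes U: "U \<in> carrier_mat n n" and X: "X \<in> carrier_mat n n" and k: "k < n"
  shows "Qf n U X k = cinner (col U k) (X *\<^sub>v col U k)"
  unfolding Qf_def using cinner_mat_vec[OF X, of "col U k" "col U k"] U k by simp

definition lc :: "nat \<Rightarrow> nat \<Rightarrow> (nat \<Rightarrow> complex) \<Rightarrow> (nat \<Rightarrow> complex mat) \<Rightarrow> complex mat" where
  "lc n r c X = mat n n (\<lambda>(a,b). \<Sum>i<r. c i * X i $$ (a,b))"

lemma lc_carrier[simp]: "lc n r c X \<in> carrier_mat n n" unfolding lc_def by simp

lemma lc_dims[simp]: "dim_row (lc n r c X) = n" "dim_col (lc n r c X) = n" unfolding lc_def by simp_all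

lemma lc_entry: "a < n \<Longrightarrow> b < n \<Longrightarrow> lc n r c X $$ (a,b) = (\<Sum>i<r. c i * X i $$ (a,b))"
  unfolding lc_def by simp

lemma Qf_lc:
  shows "Qf n U (lc n r c X) k = (\<Sum>i<r. c i * Qf n U (X i) k)"
proof -
  have "Qf n U (lc n r c X) k = (\<Sum>a<n. \<Sum>b<n. \<Sum>i<r. c i * (cnj (U $$ (a,k)) * X i $$ (a,b) * U $$ (b,k)))"
    unfolding Qf_def by (intro sum.cong refl) (simp add: lc_entry sum_distrib_left sum_distrib_right mult_ac)
  also have "\<dots> = (\<Sum>a<n. \<Sum>i<r. \<Sum>b<n. c i * (cnj (U $$ (a,k)) * X i $$ (a,b) * U $$ (b,k)))"
    by (rule sum.cong[OF refl], rule sum.swap)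
  also have "\<dots> = (\<Sum>i<r. \<Sum>a<n. \<Sum>b<n. c i * (cnj (U $$ (a,k)) * X i $$ (a,b) * U $$ (b,k)))"
    by (rule sum.swap)
  also have "\<dots> = (\<Sum>i<r. c i * Qf n U (X i) k)"
    unfolding Qf_def by (simp add: sum_distrib_left)
  finally show ?thesis .
qed

lemma mtrace_mult:
  assumes X: "X \<in> carrier_mat n n" and L: "L \<in> carrier_mat n n"
  shows "mtrace (X * L) = (\<Sum>a<n. \<Sum>b<n. X $$ (a,b) * L $$ (b,a))"
proof -
  have "mtrace (X * L) = (\<Sum>a<n. (X * L) $$ (a,a))"
    unfolding mtrace_def using X by simp
  also have "\<dots> = (\<Sum>a<n. \<Sum>b<n. X $$ (a,b) * L $$ (b,a))"
    by (intro sum.cong refl) (subst mult_entry[OF X L], auto)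
  finally show ?thesis .
qed

lemma mtrace_lc_mult:
  assumes L: "L \<in> carrier_mat n n" and X: "\<forall>i<r. X i \<in> carrier_mat n n"
  shows "mtrace (lc n r c X * L) = (\<Sum>i<r. c i * mtrace (X i * L))"
proof -
  have "mtrace (lc n r c X * L) = (\<Sum>a<n. (lc n r c X * L) $$ (a,a))"
    unfolding mtrace_def by simp
  also have "\<dots> = (\<Sum>a<n. \<Sum>b<n. \<Sum>i<r. c i * (X i $$ (a,b) * L $$ (b,a)))"
    by (intro sum.cong refl) (subst mult_entry[OF lc_carrier L], simp, simp, simp add: lc_entry sum_distrib_left sum_distrib_right mult_ac)
  also have "\<dots> = (\<Sum>a<n. \<Sum>i<r. \<Sum>b<n. c i * (X i $$ (a,b) * L $$ (b,a)))"
    by (rule sum.cong[OF refl], rule sum.swap)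
  also have "\<dots> = (\<Sum>i<r. \<Sum>a<n. \<Sum>b<n. c i * (X i $$ (a,b) * L $$ (b,a)))"
    by (rule sum.swap)
  also have "\<dots> = (\<Sum>i<r. c i * mtrace (X i * L))"
    unfolding sum_distrib_left using X L
    by (intro sum.cong refl) (subst mtrace_mult[OF _ L], auto simp: sum_distrib_left)
  finally show ?thesis .
qed

lemma linear_zero:
  assumes "Defs.linear_map n \<Phi>"
  shows "\<Phi> (0\<^sub>m n n) = 0\<^sub>m n n"
proof -
  have c: "\<Phi> (0\<^sub>m n n) \<in> carrier_mat n n" using assms unfolding Defs.linear_map_def by simp
  have "\<forall>A\<in>carrier_mat n n. \<forall>c. \<Phi> (c \<cdot>\<^sub>m A) = c \<cdot>\<^sub>m \<Phi> A" using assms unfolding Defs.linear_map_def by simp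
  then have "\<Phi> (0 \<cdot>\<^sub>m 0\<^sub>m n n) = 0 \<cdot>\<^sub>m \<Phi> (0\<^sub>m n n)" by (metis zero_carrier_mat)
  moreover have "0 \<cdot>\<^sub>m (0\<^sub>m n n :: complex mat) = 0\<^sub>m n n" by (rule eq_matI) auto
  moreover have "0 \<cdot>\<^sub>m \<Phi> (0\<^sub>m n n) = 0\<^sub>m n n" using c by (intro eq_matI) auto
  ultimately show ?thesis by simp
qed

lemma Phi_lc:
  assumes lin: "Defs.linear_map n \<Phi>" and X: "\<forall>i<r. X i \<in> carrier_mat n n"
  shows "\<Phi> (lc n r c X) = lc n r c (\<lambda>i. \<Phi> (X i))"
  using X
proof (induction r)
  case 0
  have "lc n 0 c X = 0\<^sub>m n n" unfolding lc_def by (rule eq_matI) auto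
  moreover have "lc n 0 c (\<lambda>i. \<Phi> (X i)) = 0\<^sub>m n n" unfolding lc_def by (rule eq_matI) auto
  ultimately show ?case using linear_zero[OF lin] by simp
next
  case (Suc r)
  have Xr: "X r \<in> carrier_mat n n" using Suc.prems by simp
  have PXr: "\<Phi> (X r) \<in> carrier_mat n n" using lin Xr unfolding Defs.linear_map_def by simp
  have split: "lc n (Suc r) c Y = lc n r c Y + c r \<cdot>\<^sub>m Y r" if "Y r \<in> carrier_mat n n" for Y
    unfolding lc_def by (rule eq_matI) (use that in auto)
  have "\<Phi> (lc n (Suc r) c X) = \<Phi> (lc n r c X + c r \<cdot>\<^sub>m X r)" using split[of X, OF Xr] by simp
  also have "\<dots> = \<Phi> (lc n r c X) + \<Phi> (c r \<cdot>\<^sub>m X r)"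
    using lin Xr unfolding Defs.linear_map_def by simp
  also have "\<Phi> (c r \<cdot>\<^sub>m X r) = c r \<cdot>\<^sub>m \<Phi> (X r)" using lin Xr unfolding Defs.linear_map_def by simp
  also have "\<Phi> (lc n r c X) = lc n r c (\<lambda>i. \<Phi> (X i))" using Suc by simp
  also have "lc n r c (\<lambda>i. \<Phi> (X i)) + c r \<cdot>\<^sub>m \<Phi> (X r) = lc n (Suc r) c (\<lambda>i. \<Phi> (X i))"
    using split[of "\<lambda>i. \<Phi> (X i)"] PXr by simp
  finally show ?case .
qed

definition sesq :: "nat \<Rightarrow> complex mat \<Rightarrow> (nat \<Rightarrow> complex) \<Rightarrow> (nat \<Rightarrow> complex) \<Rightarrow> complex" where
  "sesq n X f g = (\<Sum>a<n. \<Sum>b<n. cnj (f a) * X $$ (a,b) * g b)"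

lemma sesq_expand:
  "sesq n X (\<lambda>a. f a + complex_of_real t * g a) (\<lambda>a. f a + complex_of_real t * g a) =
   sesq n X f f + complex_of_real t * sesq n X f g + complex_of_real t * sesq n X g f
   + complex_of_real (t * t) * sesq n X g g"
proof -
  have "cnj (f a + complex_of_real t * g a) * X $$ (a,b) * (f b + complex_of_real t * g b) =
        cnj (f a) * X $$ (a,b) * f b + complex_of_real t * (cnj (f a) * X $$ (a,b) * g b)
        + complex_of_real t * (cnj (g a) * X $$ (a,b) * f b) + complex_of_real (t * t) * (cnj (g a) * X $$ (a,b) * g b)"
    for a b by (simp add: algebra_simps)
  then show ?thesis unfolding sesq_def by (simp add: sum.distrib sum_distrib_left)
qed

lemma cinner_sesq:
  assumes X: "X \<in> carrier_mat n n" and x: "x \<in> carrier_vec n" and y: "y \<in> carrier_vec n"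
  shows "cinner x (X *\<^sub>v y) = sesq n X (\<lambda>a. x $ a) (\<lambda>b. y $ b)"
  unfolding sesq_def by (rule cinner_mat_vec[OF X x y])

lemma psd_sesq:
  assumes "psd n X" "\<And>a. a < n \<Longrightarrow> True"
  shows "0 \<le> Re (sesq n X f f)"
proof -
  have X: "X \<in> carrier_mat n n" using assms unfolding psd_def by simp
  define x where "x = vec n f"
  have x: "x \<in> carrier_vec n" unfolding x_def by simp
  have "0 \<le> Re (cinner x (X *\<^sub>v x))" using assms x unfolding psd_def by blast
  also have "cinner x (X *\<^sub>v x) = sesq n X (\<lambda>a. x $ a) (\<lambda>b. x $ b)" by (rule cinner_sesq[OF X x x])
  also have "\<dots> = sesq n X f f" unfolding sesq_def x_def by (intro sum.cong refl) simp
  finally show ?thesis .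
qed

lemma sesq_herm:
  assumes "hermitian X" "X \<in> carrier_mat n n"
  shows "sesq n X f g = cnj (sesq n X g f)"
proof -
  have "cnj (sesq n X g f) = (\<Sum>a<n. \<Sum>b<n. g a * cnj (X $$ (a,b)) * cnj (f b))"
    unfolding sesq_def by simp
  also have "\<dots> = (\<Sum>a<n. \<Sum>b<n. g a * X $$ (b,a) * cnj (f b))"
    by (intro sum.cong refl) (subst hermitian_entry[OF assms], auto)
  also have "\<dots> = (\<Sum>b<n. \<Sum>a<n. g a * X $$ (b,a) * cnj (f b))"
    by (rule sum.swap)
  also have "\<dots> = sesq n X f g" unfolding sesq_def by (intro sum.cong refl) (simp add: mult_ac)
  finally show ?thesis by simp
qed

lemma psd_quad_zero:
  assumes P: "psd n X" and u: "u \<in> carrier_vec n" and z: "Re (cinner u (X *\<^sub>v u)) = 0"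
  shows "X *\<^sub>v u = 0\<^sub>v n"
proof -
  have X: "X \<in> carrier_mat n n" and hX: "hermitian X" using P unfolding psd_def by auto
  define w where "w = X *\<^sub>v u"
  have w: "w \<in> carrier_vec n" unfolding w_def by (rule mult_mat_vec_carrier[OF X u])
  define f where "f a = u $ a" for a
  define g where "g a = w $ a" for a
  define N where "N = (\<Sum>a<n. (cmod (w $ a))\<^sup>2)"
  have N0: "N \<ge> 0" unfolding N_def by (intro sum_nonneg) auto
  have Suu: "Re (sesq n X f f) = 0" using z cinner_sesq[OF X u u] unfolding f_def by simp
  have Swu: "sesq n X g f = N"
  proof -
    have "sesq n X g f = cinner w (X *\<^sub>v u)" using cinner_sesq[OF X w u] unfolding f_def g_def by simp
    also have "\<dots> = cinner w w" unfolding w_def ..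
    also have "\<dots> = N" unfolding N_def by (rule cinner_self[OF w])
    finally show ?thesis .
  qed
  have Suw: "sesq n X f g = N" using sesq_herm[OF hX X, of f g] Swu by simp
  define \<beta> where "\<beta> = Re (sesq n X g g)"
  have \<beta>0: "\<beta> \<ge> 0" unfolding \<beta>_def by (rule psd_sesq[OF P]) auto
  have key: "0 \<le> 2 * t * N + t * t * \<beta>" for t
  proof -
    have "0 \<le> Re (sesq n X (\<lambda>a. f a + complex_of_real t * g a) (\<lambda>a. f a + complex_of_real t * g a))"
      by (rule psd_sesq[OF P]) auto
    also have "\<dots> = 2 * t * N + t * t * \<beta>"
      unfolding sesq_expand using Suu Swu Suw unfolding \<beta>_def by simp
    finally show ?thesis .
  qed
  have "N = 0"
  proof (rule ccontr)
    assume "N \<noteq> 0"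
    then have Np: "N > 0" using N0 by simp
    define t where "t = - N / (\<beta> + 1)"
    have tneg: "t < 0" unfolding t_def using Np \<beta>0 by (simp add: divide_pos_pos)
    have "t * \<beta> \<ge> - N"
    proof -
      have "N * \<beta> / (\<beta> + 1) \<le> N" using Np \<beta>0 by (simp add: field_simps)
      then show ?thesis unfolding t_def by (simp add: field_simps)
    qed
    then have "2 * N + t * \<beta> > 0" using Np by simp
    then have "t * (2 * N + t * \<beta>) < 0" using tneg by (simp add: mult_neg_pos)
    then show False using key[of t] by (simp add: algebra_simps)
  qed
  then have "\<forall>a<n. w $ a = 0"
    unfolding N_def using sum_nonneg_eq_0_iff[of "{..<n}" "\<lambda>a. (cmod (w $ a))\<^sup>2"] by auto
  then show ?thesis unfolding w_def[symmetric] using w by (intro eq_vecI) auto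
qed

lemma psd_Qf_nonneg:
  assumes "psd n X" "U \<in> carrier_mat n n" "k < n"
  shows "0 \<le> Re (Qf n U X k)"
  using assms Qf_cinner[of U n X k] unfolding psd_def by auto

lemma ketbra_carrier[simp]: "v \<in> carrier_vec n \<Longrightarrow> ketbra v \<in> carrier_mat n n"
  unfolding ketbra_def by auto

lemma ketbra_entry: "v \<in> carrier_vec n \<Longrightarrow> a < n \<Longrightarrow> b < n \<Longrightarrow> ketbra v $$ (a,b) = v $ a * cnj (v $ b)"
  unfolding ketbra_def by auto

lemma sesq_ketbra:
  assumes v: "v \<in> carrier_vec n"
  shows "sesq n (ketbra v) f g = cnj (\<Sum>a<n. cnj (v $ a) * f a) * (\<Sum>b<n. cnj (v $ b) * g b)"
proof -
  have "sesq n (ketbra v) f g = (\<Sum>a<n. \<Sum>b<n. (cnj (f a) * v $ a) * (cnj (v $ b) * g b))"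
    unfolding sesq_def using v by (intro sum.cong refl) (simp add: ketbra_entry mult_ac)
  also have "\<dots> = (\<Sum>a<n. cnj (f a) * v $ a) * (\<Sum>b<n. cnj (v $ b) * g b)"
    by (simp add: sum_product)
  finally show ?thesis by (simp add: mult_ac)
qed

lemma psd_ketbra:
  assumes v: "v \<in> carrier_vec n"
  shows "psd n (ketbra v)"
  unfolding psd_def
proof (intro conjI ballI)
  show K: "ketbra v \<in> carrier_mat n n" using v by simp
  show "hermitian (ketbra v)"
    by (rule hermitianI[OF K]) (use v in \<open>simp add: ketbra_entry\<close>)
  fix w :: "complex vec" assume w: "w \<in> carrier_vec n"
  have "cinner w (ketbra v *\<^sub>v w) = cnj (\<Sum>a<n. cnj (v $ a) * w $ a) * (\<Sum>b<n. cnj (v $ b) * w $ b)"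
    using cinner_sesq[OF K w w] sesq_ketbra[OF v] by simp
  also have "\<dots> = complex_of_real ((cmod (\<Sum>b<n. cnj (v $ b) * w $ b))\<^sup>2)"
    by (metis complex_norm_square mult.commute)
  finally show "0 \<le> Re (cinner w (ketbra v *\<^sub>v w))" by simp
qed

lemma sesq_lc: "sesq n (lc n r c X) f g = (\<Sum>i<r. c i * sesq n (X i) f g)"
proof -
  have "sesq n (lc n r c X) f g = (\<Sum>a<n. \<Sum>b<n. \<Sum>i<r. c i * (cnj (f a) * X i $$ (a,b) * g b))"
    unfolding sesq_def by (intro sum.cong refl) (simp add: lc_entry sum_distrib_left sum_distrib_right mult_ac)
  also have "\<dots> = (\<Sum>a<n. \<Sum>i<r. \<Sum>b<n. c i * (cnj (f a) * X i $$ (a,b) * g b))"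
    by (rule sum.cong[OF refl], rule sum.swap)
  also have "\<dots> = (\<Sum>i<r. \<Sum>a<n. \<Sum>b<n. c i * (cnj (f a) * X i $$ (a,b) * g b))"
    by (rule sum.swap)
  also have "\<dots> = (\<Sum>i<r. c i * sesq n (X i) f g)"
    unfolding sesq_def by (simp add: sum_distrib_left)
  finally show ?thesis .
qed

lemma psd_lc:
  assumes X: "\<forall>i<r. psd n (X i)" and q: "\<forall>i<r. q i \<ge> 0"
  shows "psd n (lc n r (\<lambda>i. complex_of_real (q i)) X)"
  unfolding psd_def
proof (intro conjI ballI)
  let ?L = "lc n r (\<lambda>i. complex_of_real (q i)) X"
  show L: "?L \<in> carrier_mat n n" by simp
  show "hermitian ?L"
  proof (rule hermitianI[OF L])
    fix a b assume ab: "a < n" "b < n"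
    have "?L $$ (a,b) = (\<Sum>i<r. complex_of_real (q i) * X i $$ (a,b))" using ab by (simp add: lc_entry)
    also have "\<dots> = (\<Sum>i<r. complex_of_real (q i) * cnj (X i $$ (b,a)))"
    proof (intro sum.cong refl)
      fix i assume "i \<in> {..<r}"
      then have "psd n (X i)" using X by simp
      then have "hermitian (X i)" "X i \<in> carrier_mat n n" unfolding psd_def by auto
      then show "complex_of_real (q i) * X i $$ (a,b) = complex_of_real (q i) * cnj (X i $$ (b,a))"
        using hermitian_entry ab by metis
    qed
    also have "\<dots> = cnj (?L $$ (b,a))" using ab by (simp add: lc_entry)
    finally show "?L $$ (a,b) = cnj (?L $$ (b,a))" .
  qed
  fix w :: "complex vec" assume w: "w \<in> carrier_vec n"
  have "cinner w (?L *\<^sub>v w) = (\<Sum>i<r. complex_of_real (q i) * sesq n (X i) (\<lambda>a. w $ a) (\<lambda>a. w $ a))"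
    using cinner_sesq[OF L w w] sesq_lc by simp
  then have "Re (cinner w (?L *\<^sub>v w)) = (\<Sum>i<r. q i * Re (sesq n (X i) (\<lambda>a. w $ a) (\<lambda>a. w $ a)))"
    by (simp add: Re_sum)
  also have "\<dots> \<ge> 0" using X q by (intro sum_nonneg mult_nonneg_nonneg psd_sesq) auto
  finally show "0 \<le> Re (cinner w (?L *\<^sub>v w))" .
qed

lemma psd_channel:
  assumes ch: "quantum_channel n \<Phi>" and X: "psd n X"
  shows "psd n (\<Phi> X)"
proof -
  have Xc: "X \<in> carrier_mat n n" using X unfolding psd_def by simp
  have lin: "Defs.linear_map n \<Phi>" and cp: "completely_positive n \<Phi>" using ch unfolding quantum_channel_def by auto
  have PX: "\<Phi> X \<in> carrier_mat n n" using lin Xc unfolding Defs.linear_map_def by simp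
  have "\<forall>k M. psd (k * n) M \<longrightarrow> psd (k * n) (ampliate k n \<Phi> M)" using cp unfolding completely_positive_def by simp
  then have "psd (1 * n) X \<longrightarrow> psd (1 * n) (ampliate 1 n \<Phi> X)" by blast
  then have "psd n (ampliate 1 n \<Phi> X)" using X by simp
  moreover have "ampliate 1 n \<Phi> X = \<Phi> X"
  proof (rule eq_matI)
    have inner: "mat n n (\<lambda>(i, j). X $$ (0 * n + i, 0 * n + j)) = X"
      by (rule eq_matI) (use Xc in auto)
    fix a b assume "a < dim_row (\<Phi> X)" "b < dim_col (\<Phi> X)"
    then have a: "a < n" and b: "b < n" using PX by auto
    show "ampliate 1 n \<Phi> X $$ (a,b) = \<Phi> X $$ (a,b)"
      unfolding ampliate_def using a b inner by simp
  qed (use PX in \<open>auto simp: ampliate_def\<close>)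
  ultimately show ?thesis by simp
qed

lemma bessel:
  fixes r :: nat and f :: "nat \<Rightarrow> complex"
  assumes V: "\<forall>i<r. v i \<in> carrier_vec n"
    and orth: "\<forall>i<r. \<forall>j<r. cinner (v i) (v j) = (if i = j then 1 else 0)"
  shows "(\<Sum>i<r. (cmod (\<Sum>a<n. cnj (v i $ a) * f a))\<^sup>2) \<le> (\<Sum>a<n. (cmod (f a))\<^sup>2)"
proof -
  define c where "c i = (\<Sum>a<n. cnj (v i $ a) * f a)" for i
  define z where "z a = f a - (\<Sum>i<r. c i * v i $ a)" for a
  have ov: "(\<Sum>a<n. cnj (v i $ a) * v j $ a) = (if i = j then 1 else 0)" if "i < r" "j < r" for i j
  proof -
    have "dim_vec (v i) = n" using V that by auto
    then show ?thesis using orth[rule_format, OF that] unfolding cinner_def by simp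
  qed
  have T2: "(\<Sum>a<n. cnj (f a) * (\<Sum>j<r. c j * v j $ a)) = (\<Sum>j<r. c j * cnj (c j))"
  proof -
    have "(\<Sum>a<n. cnj (f a) * (\<Sum>j<r. c j * v j $ a)) = (\<Sum>a<n. \<Sum>j<r. c j * (cnj (f a) * v j $ a))"
      by (simp add: sum_distrib_left mult_ac)
    also have "\<dots> = (\<Sum>j<r. \<Sum>a<n. c j * (cnj (f a) * v j $ a))" by (rule sum.swap)
    also have "\<dots> = (\<Sum>j<r. c j * cnj (c j))" unfolding c_def by (simp add: sum_distrib_left mult_ac)
    finally show ?thesis .
  qed
  have T3: "(\<Sum>a<n. cnj (\<Sum>i<r. c i * v i $ a) * f a) = (\<Sum>i<r. cnj (c i) * c i)"
  proof -
    have "(\<Sum>a<n. cnj (\<Sum>i<r. c i * v i $ a) * f a) = (\<Sum>a<n. \<Sum>i<r. cnj (c i) * (cnj (v i $ a) * f a))"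
      by (simp add: sum_distrib_left sum_distrib_right mult_ac)
    also have "\<dots> = (\<Sum>i<r. \<Sum>a<n. cnj (c i) * (cnj (v i $ a) * f a))" by (rule sum.swap)
    also have "\<dots> = (\<Sum>i<r. cnj (c i) * c i)" unfolding c_def by (simp add: sum_distrib_left)
    finally show ?thesis .
  qed
  have T4: "(\<Sum>a<n. cnj (\<Sum>i<r. c i * v i $ a) * (\<Sum>j<r. c j * v j $ a)) = (\<Sum>i<r. cnj (c i) * c i)"
  proof -
    have "(\<Sum>a<n. cnj (\<Sum>i<r. c i * v i $ a) * (\<Sum>j<r. c j * v j $ a)) =
          (\<Sum>a<n. \<Sum>i<r. \<Sum>j<r. cnj (c i) * c j * (cnj (v i $ a) * v j $ a))"
      by (intro sum.cong refl) (subst cnj_sum, subst sum_product, intro sum.cong refl, simp add: mult_ac)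
    also have "\<dots> = (\<Sum>i<r. \<Sum>a<n. \<Sum>j<r. cnj (c i) * c j * (cnj (v i $ a) * v j $ a))" by (rule sum.swap)
    also have "\<dots> = (\<Sum>i<r. \<Sum>j<r. \<Sum>a<n. cnj (c i) * c j * (cnj (v i $ a) * v j $ a))"
      by (rule sum.cong[OF refl], rule sum.swap)
    also have "\<dots> = (\<Sum>i<r. \<Sum>j<r. cnj (c i) * c j * (if i = j then 1 else 0))"
      by (intro sum.cong refl) (simp add: sum_distrib_left[symmetric] ov)
    also have "\<dots> = (\<Sum>i<r. cnj (c i) * c i)"
      by (intro sum.cong refl) (simp add: if_distrib sum.delta' cong: if_cong)
    finally show ?thesis .
  qed
  have "(\<Sum>a<n. cnj (z a) * z a) = (\<Sum>a<n. cnj (f a) * f a) - (\<Sum>a<n. cnj (f a) * (\<Sum>j<r. c j * v j $ a))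
        - (\<Sum>a<n. cnj (\<Sum>i<r. c i * v i $ a) * f a) + (\<Sum>a<n. cnj (\<Sum>i<r. c i * v i $ a) * (\<Sum>j<r. c j * v j $ a))"
    unfolding z_def by (simp add: algebra_simps sum.distrib sum_subtractf)
  also have "\<dots> = (\<Sum>a<n. cnj (f a) * f a) - (\<Sum>i<r. cnj (c i) * c i)"
    unfolding T2 T3 T4 by (simp add: mult.commute)
  finally have eq: "(\<Sum>a<n. cnj (z a) * z a) = (\<Sum>a<n. cnj (f a) * f a) - (\<Sum>i<r. cnj (c i) * c i)" .
  have nz: "(\<Sum>a<n. cnj (x a) * x a) = complex_of_real (\<Sum>a<n. (cmod (x a))\<^sup>2)" for x :: "nat \<Rightarrow> complex"
  proof -
    have "(\<Sum>a<n. cnj (x a) * x a) = (\<Sum>a<n. complex_of_real ((cmod (x a))\<^sup>2))"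
      by (intro sum.cong refl) (metis complex_norm_square mult.commute)
    then show ?thesis by (simp only: of_real_sum)
  qed
  have nc: "(\<Sum>i<r. cnj (c i) * c i) = complex_of_real (\<Sum>i<r. (cmod (c i))\<^sup>2)"
  proof -
    have "(\<Sum>i<r. cnj (c i) * c i) = (\<Sum>i<r. complex_of_real ((cmod (c i))\<^sup>2))"
      by (intro sum.cong refl) (metis complex_norm_square mult.commute)
    then show ?thesis by (simp only: of_real_sum)
  qed
  have "(\<Sum>a<n. (cmod (z a))\<^sup>2) = (\<Sum>a<n. (cmod (f a))\<^sup>2) - (\<Sum>i<r. (cmod (c i))\<^sup>2)"
    using eq unfolding nz nc by (metis of_real_diff of_real_eq_iff)
  moreover have "(\<Sum>a<n. (cmod (z a))\<^sup>2) \<ge> 0" by (intro sum_nonneg) auto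
  ultimately show ?thesis unfolding c_def by simp
qed

lemma Qf_sesq: "Qf n U X k = sesq n X (\<lambda>a. U $$ (a,k)) (\<lambda>b. U $$ (b,k))"
  unfolding Qf_def sesq_def ..

lemma sesq_diag:
  assumes U: "U \<in> carrier_mat n n"
  shows "sesq n (U * rdiag n d * adj U) f g =
    (\<Sum>l<n. complex_of_real (d l) * (cnj (\<Sum>a<n. cnj (U $$ (a,l)) * f a) * (\<Sum>b<n. cnj (U $$ (b,l)) * g b)))"
proof -
  have "sesq n (U * rdiag n d * adj U) f g =
     (\<Sum>a<n. \<Sum>b<n. \<Sum>l<n. complex_of_real (d l) * ((cnj (f a) * U $$ (a,l)) * (cnj (U $$ (b,l)) * g b)))"
    unfolding sesq_def by (intro sum.cong refl) (simp add: diag_entry[OF U] sum_distrib_left sum_distrib_right mult_ac)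
  also have "\<dots> = (\<Sum>a<n. \<Sum>l<n. \<Sum>b<n. complex_of_real (d l) * ((cnj (f a) * U $$ (a,l)) * (cnj (U $$ (b,l)) * g b)))"
    by (rule sum.cong[OF refl], rule sum.swap)
  also have "\<dots> = (\<Sum>l<n. \<Sum>a<n. \<Sum>b<n. complex_of_real (d l) * ((cnj (f a) * U $$ (a,l)) * (cnj (U $$ (b,l)) * g b)))"
    by (rule sum.swap)
  also have "\<dots> = (\<Sum>l<n. complex_of_real (d l) * ((\<Sum>a<n. cnj (f a) * U $$ (a,l)) * (\<Sum>b<n. cnj (U $$ (b,l)) * g b)))"
    by (intro sum.cong refl) (subst sum_product, simp add: sum_distrib_left)
  also have "\<dots> = (\<Sum>l<n. complex_of_real (d l) * (cnj (\<Sum>a<n. cnj (U $$ (a,l)) * f a) * (\<Sum>b<n. cnj (U $$ (b,l)) * g b)))"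
    by (simp add: mult.commute)
  finally show ?thesis .
qed

lemma sesq_add: "A \<in> carrier_mat n n \<Longrightarrow> B \<in> carrier_mat n n \<Longrightarrow> sesq n (A + B) f g = sesq n A f g + sesq n B f g"
  unfolding sesq_def by (simp add: algebra_simps sum.distrib)

lemma sesq_minus: "A \<in> carrier_mat n n \<Longrightarrow> B \<in> carrier_mat n n \<Longrightarrow> sesq n (A - B) f g = sesq n A f g - sesq n B f g"
  unfolding sesq_def by (simp add: algebra_simps sum_subtractf)

lemma sesq_one: "sesq n (1\<^sub>m n) f g = (\<Sum>a<n. cnj (f a) * g a)"
  unfolding sesq_def
proof (intro sum.cong refl)
  fix a assume a: "a \<in> {..<n}"
  have "(\<Sum>b<n. cnj (f a) * 1\<^sub>m n $$ (a,b) * g b) = (\<Sum>b<n. if a = b then cnj (f a) * g b else 0)"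
    using a by (intro sum.cong refl) auto
  then show "(\<Sum>b<n. cnj (f a) * 1\<^sub>m n $$ (a,b) * g b) = cnj (f a) * g a" using a by simp
qed

lemma Qf_add: "A \<in> carrier_mat n n \<Longrightarrow> B \<in> carrier_mat n n \<Longrightarrow> Qf n U (A + B) k = Qf n U A k + Qf n U B k"
  unfolding Qf_sesq by (rule sesq_add)

lemma psd_IP:
  fixes r :: nat
  assumes V: "\<forall>i<r. v i \<in> carrier_vec n"
    and orth: "\<forall>i<r. \<forall>j<r. cinner (v i) (v j) = (if i = j then 1 else 0)"
  shows "psd n (1\<^sub>m n - lc n r (\<lambda>_. 1) (\<lambda>i. ketbra (v i)))"
  unfolding psd_def
proof (intro conjI ballI)
  let ?P = "lc n r (\<lambda>_. 1) (\<lambda>i. ketbra (v i))"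
  have Pc: "?P \<in> carrier_mat n n" by simp
  show IP: "1\<^sub>m n - ?P \<in> carrier_mat n n" by (rule minus_carrier_mat[OF Pc])
  show "hermitian (1\<^sub>m n - ?P)"
  proof (rule hermitianI[OF IP])
    fix a b assume ab: "a < n" "b < n"
    have kb: "ketbra (v i) $$ (x,y) = v i $ x * cnj (v i $ y)" if "i < r" "x < n" "y < n" for i x y
      using V that ketbra_entry by auto
    have "(1\<^sub>m n - ?P) $$ (a,b) = (if a = b then 1 else 0) - (\<Sum>i<r. v i $ a * cnj (v i $ b))"
      using ab kb by (simp add: lc_entry)
    also have "\<dots> = cnj ((if b = a then 1 else 0) - (\<Sum>i<r. v i $ b * cnj (v i $ a)))"
      by (simp add: mult.commute)
    also have "\<dots> = cnj ((1\<^sub>m n - ?P) $$ (b,a))"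
      using ab kb by (simp add: lc_entry)
    finally show "(1\<^sub>m n - ?P) $$ (a,b) = cnj ((1\<^sub>m n - ?P) $$ (b,a))" .
  qed
  fix w :: "complex vec" assume w: "w \<in> carrier_vec n"
  define f where "f a = w $ a" for a
  have "cinner w ((1\<^sub>m n - ?P) *\<^sub>v w) = sesq n (1\<^sub>m n - ?P) f f"
    using cinner_sesq[OF IP w w] unfolding f_def by simp
  also have "\<dots> = sesq n (1\<^sub>m n) f f - sesq n ?P f f" by (rule sesq_minus) auto
  also have "sesq n ?P f f = (\<Sum>i<r. cnj (\<Sum>a<n. cnj (v i $ a) * f a) * (\<Sum>b<n. cnj (v i $ b) * f b))"
    unfolding sesq_lc using V by (intro sum.cong refl) (simp add: sesq_ketbra)
  also have "\<dots> = complex_of_real (\<Sum>i<r. (cmod (\<Sum>a<n. cnj (v i $ a) * f a))\<^sup>2)"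
  proof -
    have "\<And>z::complex. cnj z * z = complex_of_real ((cmod z)\<^sup>2)" by (metis complex_norm_square mult.commute)
    then show ?thesis by (simp only: of_real_sum)
  qed
  also have "sesq n (1\<^sub>m n) f f = complex_of_real (\<Sum>a<n. (cmod (f a))\<^sup>2)"
  proof -
    have "\<And>z::complex. cnj z * z = complex_of_real ((cmod z)\<^sup>2)" by (metis complex_norm_square mult.commute)
    then show ?thesis unfolding sesq_one by (simp only: of_real_sum)
  qed
  finally have "Re (cinner w ((1\<^sub>m n - ?P) *\<^sub>v w)) = (\<Sum>a<n. (cmod (f a))\<^sup>2) - (\<Sum>i<r. (cmod (\<Sum>a<n. cnj (v i $ a) * f a))\<^sup>2)"
    by simp
  moreover have "(\<Sum>i<r. (cmod (\<Sum>a<n. cnj (v i $ a) * f a))\<^sup>2) \<le> (\<Sum>a<n. (cmod (f a))\<^sup>2)"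
    by (rule bessel[OF V orth])
  ultimately show "0 \<le> Re (cinner w ((1\<^sub>m n - ?P) *\<^sub>v w))" by simp
qed

lemma jensen_ln:
  fixes w x :: "'a \<Rightarrow> real"
  assumes K: "finite K" and w: "\<forall>k\<in>K. 0 \<le> w k" and x: "\<forall>k\<in>K. 0 < x k" and s1: "sum w K = 1"
  shows "(\<Sum>k\<in>K. w k * ln (x k)) \<le> ln (\<Sum>k\<in>K. w k * x k)"
proof -
  define s where "s = (\<Sum>k\<in>K. w k * x k)"
  have "\<exists>k\<in>K. w k \<noteq> 0" using s1 by (metis sum.neutral zero_neq_one)
  then obtain k0 where k0': "k0 \<in> K" "w k0 \<noteq> 0" by blast
  have "w k0 \<ge> 0" using w k0'(1) by blast
  then have k0: "k0 \<in> K" "w k0 > 0" using k0' by auto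
  have "w k0 * x k0 \<le> s" unfolding s_def
    using K k0 w x by (intro member_le_sum) (auto intro: mult_nonneg_nonneg less_imp_le)
  moreover have "w k0 * x k0 > 0" using k0 x by simp
  ultimately have spos: "s > 0" by simp
  have "(\<Sum>k\<in>K. w k * ln (x k)) - ln s = (\<Sum>k\<in>K. w k * ln (x k / s))"
  proof -
    have "(\<Sum>k\<in>K. w k * ln (x k / s)) = (\<Sum>k\<in>K. w k * ln (x k) - w k * ln s)"
    proof (intro sum.cong refl)
      fix k assume k: "k \<in> K"
      have "ln (x k / s) = ln (x k) - ln s" using x k spos by (intro ln_divide_pos) auto
      then show "w k * ln (x k / s) = w k * ln (x k) - w k * ln s" by (simp add: right_diff_distrib)
    qed
    also have "\<dots> = (\<Sum>k\<in>K. w k * ln (x k)) - ln s"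
      by (simp add: sum_subtractf sum_distrib_right[symmetric] s1)
    finally show ?thesis by simp
  qed
  also have "\<dots> \<le> (\<Sum>k\<in>K. w k * (x k / s - 1))"
    using w x spos by (intro sum_mono mult_left_mono ln_le_minus_one) auto
  also have "\<dots> = (\<Sum>k\<in>K. w k * x k) / s - 1"
    by (simp add: algebra_simps sum_subtractf sum_divide_distrib s1)
  also have "\<dots> = 0" using spos unfolding s_def by simp
  finally show ?thesis unfolding s_def by simp
qed

lemma entropy_in:
  fixes r :: nat and p :: "nat \<Rightarrow> real" and f :: "real \<Rightarrow> real"
  assumes V: "\<forall>i<r. v i \<in> carrier_vec n"
    and orth: "\<forall>i<r. \<forall>j<r. cinner (v i) (v j) = (if i = j then 1 else 0)"
    and U: "unitary_mat n U"
    and rho: "lc n r (\<lambda>i. complex_of_real (p i)) (\<lambda>i. ketbra (v i)) = U * rdiag n d * adj U"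
  shows "(\<Sum>k<n. d k * f (d k)) = (\<Sum>i<r. p i * f (p i))"
proof -
  have Uc: "U \<in> carrier_mat n n" using U unfolding unitary_mat_def by simp
  let ?rho = "lc n r (\<lambda>i. complex_of_real (p i)) (\<lambda>i. ketbra (v i))"
  define g where "g i k = (\<Sum>a<n. cnj (U $$ (a,k)) * v i $ a)" for i k
  have ov: "(\<Sum>a<n. cnj (v j $ a) * v i $ a) = (if j = i then 1 else 0)" if "i < r" "j < r" for i j
  proof -
    have "dim_vec (v j) = n" using V that by auto
    then show ?thesis using orth[rule_format, OF that(2,1)] unfolding cinner_def by simp
  qed
  have dk: "d k = (\<Sum>i<r. p i * (cmod (g i k))\<^sup>2)" if k: "k < n" for k
  proof -
    have "complex_of_real (d k) = Qf n U ?rho k" using Qf_self[OF U k, of d] rho by simp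
    also have "\<dots> = (\<Sum>i<r. complex_of_real (p i) * Qf n U (ketbra (v i)) k)" by (rule Qf_lc)
    also have "\<dots> = (\<Sum>i<r. complex_of_real (p i * (cmod (g i k))\<^sup>2))"
    proof (intro sum.cong refl)
      fix i assume "i \<in> {..<r}"
      then have vi: "v i \<in> carrier_vec n" using V by simp
      have "Qf n U (ketbra (v i)) k = cnj (\<Sum>a<n. cnj (v i $ a) * U $$ (a,k)) * (\<Sum>b<n. cnj (v i $ b) * U $$ (b,k))"
        unfolding Qf_sesq sesq_ketbra[OF vi] ..
      also have "(\<Sum>a<n. cnj (v i $ a) * U $$ (a,k)) = cnj (g i k)" unfolding g_def by (simp add: mult.commute)
      also have "cnj (cnj (g i k)) * cnj (g i k) = complex_of_real ((cmod (g i k))\<^sup>2)"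
        by (simp only: complex_cnj_cnj complex_norm_square)
      finally show "complex_of_real (p i) * Qf n U (ketbra (v i)) k = complex_of_real (p i * (cmod (g i k))\<^sup>2)"
        by simp
    qed
    also have "\<dots> = complex_of_real (\<Sum>i<r. p i * (cmod (g i k))\<^sup>2)" by (simp only: of_real_sum)
    finally show ?thesis by (simp only: of_real_eq_iff)
  qed
  have rel: "complex_of_real (d k) * g i k = complex_of_real (p i) * g i k" if i: "i < r" and k: "k < n" for i k
  proof -
    let ?f = "\<lambda>a. U $$ (a,k)" and ?h = "\<lambda>b. v i $ b"
    have "sesq n ?rho ?f ?h = (\<Sum>j<r. complex_of_real (p j) * sesq n (ketbra (v j)) ?f ?h)" by (rule sesq_lc)
    also have "\<dots> = (\<Sum>j<r. complex_of_real (p j) * (g j k * (if j = i then 1 else 0)))"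
    proof (intro sum.cong refl)
      fix j assume "j \<in> {..<r}"
      then have j: "j < r" and vj: "v j \<in> carrier_vec n" using V by auto
      have "sesq n (ketbra (v j)) ?f ?h = cnj (\<Sum>a<n. cnj (v j $ a) * U $$ (a,k)) * (\<Sum>b<n. cnj (v j $ b) * v i $ b)"
        by (rule sesq_ketbra[OF vj])
      also have "(\<Sum>a<n. cnj (v j $ a) * U $$ (a,k)) = cnj (g j k)" unfolding g_def by (simp add: mult.commute)
      also have "(\<Sum>b<n. cnj (v j $ b) * v i $ b) = (if j = i then 1 else 0)" by (rule ov[OF i j])
      finally show "complex_of_real (p j) * sesq n (ketbra (v j)) ?f ?h = complex_of_real (p j) * (g j k * (if j = i then 1 else 0))"
        by simp
    qed
    also have "\<dots> = complex_of_real (p i) * g i k" using i by (simp add: if_distrib cong: if_cong)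
    finally have 1: "sesq n ?rho ?f ?h = complex_of_real (p i) * g i k" .
    have "sesq n ?rho ?f ?h = (\<Sum>l<n. complex_of_real (d l) * (cnj (\<Sum>a<n. cnj (U $$ (a,l)) * U $$ (a,k)) * (\<Sum>b<n. cnj (U $$ (b,l)) * v i $ b)))"
      unfolding rho by (rule sesq_diag[OF Uc])
    also have "\<dots> = (\<Sum>l<n. if l = k then complex_of_real (d l) * g i l else 0)"
      unfolding g_def using k by (intro sum.cong refl) (auto simp: unitary_U1[OF U])
    also have "\<dots> = complex_of_real (d k) * g i k" using k by simp
    finally have 2: "sesq n ?rho ?f ?h = complex_of_real (d k) * g i k" .
    show ?thesis using 1 2 by metis
  qed
  have pars: "(\<Sum>k<n. (cmod (g i k))\<^sup>2) = 1" if i: "i < r" for i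
  proof -
    have "complex_of_real (\<Sum>k<n. (cmod (g i k))\<^sup>2) = (\<Sum>k<n. g i k * cnj (g i k))"
      by (simp add: of_real_sum complex_norm_square del: of_real_power)
    also have "\<dots> = (\<Sum>k<n. \<Sum>a<n. \<Sum>b<n. (v i $ a * cnj (v i $ b)) * (U $$ (b,k) * cnj (U $$ (a,k))))"
      unfolding g_def by (intro sum.cong refl) (subst cnj_sum, subst sum_product, intro sum.cong refl, simp add: mult_ac)
    also have "\<dots> = (\<Sum>a<n. \<Sum>k<n. \<Sum>b<n. (v i $ a * cnj (v i $ b)) * (U $$ (b,k) * cnj (U $$ (a,k))))"
      by (rule sum.swap)
    also have "\<dots> = (\<Sum>a<n. \<Sum>b<n. \<Sum>k<n. (v i $ a * cnj (v i $ b)) * (U $$ (b,k) * cnj (U $$ (a,k))))"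
      by (rule sum.cong[OF refl], rule sum.swap)
    also have "\<dots> = (\<Sum>a<n. \<Sum>b<n. (v i $ a * cnj (v i $ b)) * (if b = a then 1 else 0))"
      by (intro sum.cong refl) (simp add: sum_distrib_left[symmetric] unitary_U2[OF U])
    also have "\<dots> = (\<Sum>a<n. v i $ a * cnj (v i $ a))"
      by (intro sum.cong refl) (simp add: if_distrib sum.delta cong: if_cong)
    also have "\<dots> = 1" using ov[OF i i] by (simp add: mult.commute)
    finally show ?thesis by (metis of_real_eq_1_iff)
  qed
  have "(\<Sum>k<n. d k * f (d k)) = (\<Sum>k<n. \<Sum>i<r. p i * ((cmod (g i k))\<^sup>2 * f (d k)))"
    using dk by (simp add: sum_distrib_right mult_ac)
  also have "\<dots> = (\<Sum>i<r. \<Sum>k<n. p i * ((cmod (g i k))\<^sup>2 * f (d k)))" by (rule sum.swap)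
  also have "\<dots> = (\<Sum>i<r. \<Sum>k<n. p i * ((cmod (g i k))\<^sup>2 * f (p i)))"
  proof (intro sum.cong refl)
    fix i k assume i: "i \<in> {..<r}" and k: "k \<in> {..<n}"
    show "p i * ((cmod (g i k))\<^sup>2 * f (d k)) = p i * ((cmod (g i k))\<^sup>2 * f (p i))"
    proof (cases "g i k = 0")
      case False
      then have "complex_of_real (d k) = complex_of_real (p i)" using rel[of i k] i k by simp
      then show ?thesis by simp
    qed simp
  qed
  also have "\<dots> = (\<Sum>i<r. p i * f (p i) * (\<Sum>k<n. (cmod (g i k))\<^sup>2))"
    by (simp add: sum_distrib_left mult_ac)
  also have "\<dots> = (\<Sum>i<r. p i * f (p i))" using pars by simp
  finally show ?thesis .
qed

lemma zero_dir:
  fixes r :: nat and p :: "nat \<Rightarrow> real"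
  assumes U: "unitary_mat n U" and rhoU: "\<rho> = U * rdiag n d * adj U"
    and rho: "\<rho> = lc n r (\<lambda>i. complex_of_real (p i)) \<sigma>"
    and ps: "\<forall>i<r. psd n (\<sigma> i)" and pp: "\<forall>i<r. 0 < p i"
    and k: "k < n" and dk: "d k = 0" and i: "i < r"
  shows "\<sigma> i *\<^sub>v col U k = 0\<^sub>v n"
proof -
  have Uc: "U \<in> carrier_mat n n" using U unfolding unitary_mat_def by simp
  have "complex_of_real (d k) = Qf n U \<rho> k" using Qf_self[OF U k, of d] rhoU by simp
  also have "\<dots> = (\<Sum>j<r. complex_of_real (p j) * Qf n U (\<sigma> j) k)" unfolding rho by (rule Qf_lc)
  finally have E: "complex_of_real (d k) = (\<Sum>j<r. complex_of_real (p j) * Qf n U (\<sigma> j) k)" .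
  have "Re (complex_of_real (d k)) = Re (\<Sum>j<r. complex_of_real (p j) * Qf n U (\<sigma> j) k)" using E by simp
  then have "0 = (\<Sum>j<r. p j * Re (Qf n U (\<sigma> j) k))" using dk by simp
  moreover have "\<forall>j\<in>{..<r}. 0 \<le> p j * Re (Qf n U (\<sigma> j) k)"
  proof
    fix j assume "j \<in> {..<r}"
    then have "0 \<le> p j" "0 \<le> Re (Qf n U (\<sigma> j) k)" using ps pp psd_Qf_nonneg[OF _ Uc k] by (auto simp: less_imp_le)
    then show "0 \<le> p j * Re (Qf n U (\<sigma> j) k)" by simp
  qed
  ultimately have "p i * Re (Qf n U (\<sigma> i) k) = 0"
    using sum_nonneg_eq_0_iff[of "{..<r}" "\<lambda>j. p j * Re (Qf n U (\<sigma> j) k)"] i by auto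
  moreover have "p i > 0" using pp i by simp
  ultimately have z: "Re (Qf n U (\<sigma> i) k) = 0" by simp
  have si: "\<sigma> i \<in> carrier_mat n n" using ps i unfolding psd_def by simp
  have "Re (cinner (col U k) (\<sigma> i *\<^sub>v col U k)) = 0" using z Qf_cinner[OF Uc si k] by simp
  then show ?thesis using psd_quad_zero[of n "\<sigma> i" "col U k"] ps i Uc k by simp
qed

lemma supp_incl:
  fixes r :: nat and p :: "nat \<Rightarrow> real"
  assumes U: "unitary_mat n U" and rhoU: "\<rho> = U * rdiag n d * adj U"
    and rho: "\<rho> = lc n r (\<lambda>i. complex_of_real (p i)) \<sigma>"
    and ps: "\<forall>i<r. psd n (\<sigma> i)" and pp: "\<forall>i<r. 0 < p i" and i: "i < r"
  shows "supp (\<sigma> i) \<subseteq> supp \<rho>"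
proof
  have Uc: "U \<in> carrier_mat n n" using U unfolding unitary_mat_def by simp
  have si: "\<sigma> i \<in> carrier_mat n n" and hs: "hermitian (\<sigma> i)" using ps i unfolding psd_def by auto
  have rc: "\<rho> \<in> carrier_mat n n" unfolding rho by simp
  fix x assume "x \<in> supp (\<sigma> i)"
  then obtain y where xy: "x = \<sigma> i *\<^sub>v y" and y: "y \<in> carrier_vec n"
    unfolding supp_def using si by auto
  have x: "x \<in> carrier_vec n" unfolding xy using si y by simp
  define gk where "gk l = (\<Sum>a<n. cnj (U $$ (a,l)) * x $ a)" for l
  have g0: "gk l = 0" if l: "l < n" and dl: "d l = 0" for l
  proof -
    have cl: "col U l \<in> carrier_vec n" by (rule col_carrier_vec[OF l Uc])
    have e1: "gk l = cinner (col U l) x" unfolding gk_def cinner_def using Uc l by simp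
    have e2: "cinner (col U l) x = sesq n (\<sigma> i) (\<lambda>a. col U l $ a) (\<lambda>b. y $ b)"
      unfolding xy by (rule cinner_sesq[OF si cl y])
    have e3: "sesq n (\<sigma> i) (\<lambda>a. col U l $ a) (\<lambda>b. y $ b) = cnj (sesq n (\<sigma> i) (\<lambda>b. y $ b) (\<lambda>a. col U l $ a))"
      by (rule sesq_herm[OF hs si])
    have e4: "sesq n (\<sigma> i) (\<lambda>b. y $ b) (\<lambda>a. col U l $ a) = cinner y (\<sigma> i *\<^sub>v col U l)"
      by (rule cinner_sesq[OF si y cl, symmetric])
    have e5: "\<sigma> i *\<^sub>v col U l = 0\<^sub>v n" by (rule zero_dir[OF U rhoU rho ps pp l dl i])
    have e6: "cinner y (0\<^sub>v n) = 0" unfolding cinner_def using y by simp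
    show ?thesis using e1 e2 e3 e4 e5 e6 by simp
  qed
  define h where "h l = (if d l = 0 then 0 else gk l / complex_of_real (d l))" for l
  have dh: "complex_of_real (d l) * h l = gk l" if "l < n" for l
    using g0[OF that] unfolding h_def by auto
  define z where "z = vec n (\<lambda>b. \<Sum>m<n. h m * U $$ (b,m))"
  have z: "z \<in> carrier_vec n" unfolding z_def by simp
  have "\<rho> *\<^sub>v z = x"
  proof (rule eq_vecI)
    show "dim_vec (\<rho> *\<^sub>v z) = dim_vec x" using rc x by simp
    fix a assume "a < dim_vec x"
    then have a: "a < n" using x by simp
    have "(\<rho> *\<^sub>v z) $ a = (\<Sum>b<n. \<rho> $$ (a,b) * z $ b)"
      using rc z a by (simp add: scalar_prod_def atLeast0LessThan row_def)
    also have "\<dots> = (\<Sum>b<n. (\<Sum>l<n. U $$ (a,l) * d l * cnj (U $$ (b,l))) * (\<Sum>m<n. h m * U $$ (b,m)))"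
      unfolding rhoU z_def by (intro sum.cong refl) (simp add: diag_entry[OF Uc a])
    also have "\<dots> = (\<Sum>b<n. \<Sum>l<n. \<Sum>m<n. (U $$ (a,l) * d l * h m) * (cnj (U $$ (b,l)) * U $$ (b,m)))"
      by (intro sum.cong refl) (subst sum_product, intro sum.cong refl, simp add: mult_ac)
    also have "\<dots> = (\<Sum>l<n. \<Sum>b<n. \<Sum>m<n. (U $$ (a,l) * d l * h m) * (cnj (U $$ (b,l)) * U $$ (b,m)))"
      by (rule sum.swap)
    also have "\<dots> = (\<Sum>l<n. \<Sum>m<n. \<Sum>b<n. (U $$ (a,l) * d l * h m) * (cnj (U $$ (b,l)) * U $$ (b,m)))"
      by (rule sum.cong[OF refl], rule sum.swap)
    also have "\<dots> = (\<Sum>l<n. \<Sum>m<n. if l = m then U $$ (a,l) * d l * h m else 0)"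
    proof (intro sum.cong refl)
      fix l m assume l: "l \<in> {..<n}" and m: "m \<in> {..<n}"
      have "(\<Sum>b<n. (U $$ (a,l) * d l * h m) * (cnj (U $$ (b,l)) * U $$ (b,m))) =
            (U $$ (a,l) * d l * h m) * (\<Sum>b<n. cnj (U $$ (b,l)) * U $$ (b,m))"
        by (rule sum_distrib_left[symmetric])
      also have "(\<Sum>b<n. cnj (U $$ (b,l)) * U $$ (b,m)) = (if l = m then 1 else 0)"
        using l m by (intro unitary_U1[OF U]) auto
      finally show "(\<Sum>b<n. (U $$ (a,l) * d l * h m) * (cnj (U $$ (b,l)) * U $$ (b,m))) =
            (if l = m then U $$ (a,l) * d l * h m else 0)" by simp
    qed
    also have "\<dots> = (\<Sum>l<n. U $$ (a,l) * gk l)"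
    proof (intro sum.cong refl)
      fix l assume l: "l \<in> {..<n}"
      have "(\<Sum>m<n. if l = m then U $$ (a,l) * d l * h m else 0) = U $$ (a,l) * d l * h l"
        using l by simp
      also have "\<dots> = U $$ (a,l) * (complex_of_real (d l) * h l)" by (simp only: mult.assoc)
      also have "\<dots> = U $$ (a,l) * gk l" using dh l by simp
      finally show "(\<Sum>m<n. if l = m then U $$ (a,l) * d l * h m else 0) = U $$ (a,l) * gk l" .
    qed
    also have "\<dots> = (\<Sum>l<n. \<Sum>b<n. (U $$ (a,l) * cnj (U $$ (b,l))) * x $ b)"
      unfolding gk_def by (simp add: sum_distrib_left mult_ac)
    also have "\<dots> = (\<Sum>b<n. \<Sum>l<n. (U $$ (a,l) * cnj (U $$ (b,l))) * x $ b)"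
      by (rule sum.swap)
    also have "\<dots> = (\<Sum>b<n. if a = b then x $ b else 0)"
    proof (intro sum.cong refl)
      fix b assume b: "b \<in> {..<n}"
      have "(\<Sum>l<n. (U $$ (a,l) * cnj (U $$ (b,l))) * x $ b) = (\<Sum>l<n. U $$ (a,l) * cnj (U $$ (b,l))) * x $ b"
        by (rule sum_distrib_right[symmetric])
      also have "(\<Sum>l<n. U $$ (a,l) * cnj (U $$ (b,l))) = (if a = b then 1 else 0)"
        using b by (intro unitary_U2[OF U a]) auto
      finally show "(\<Sum>l<n. (U $$ (a,l) * cnj (U $$ (b,l))) * x $ b) = (if a = b then x $ b else 0)" by simp
    qed
    also have "\<dots> = x $ a" using a by simp
    finally show "(\<rho> *\<^sub>v z) $ a = x $ a" .
  qed
  then show "x \<in> supp \<rho>" unfolding supp_def using z rc by auto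
qed

lemma Qf_one:
  assumes U: "unitary_mat n U" and k: "k < n"
  shows "Qf n U (1\<^sub>m n) k = 1"
  unfolding Qf_sesq sesq_one using unitary_U1[OF U k k] by simp

lemma mtrace_ketbra:
  assumes v: "v \<in> carrier_vec n" and v1: "cinner v v = 1"
  shows "mtrace (ketbra v) = 1"
proof -
  have "mtrace (ketbra v) = (\<Sum>a<n. v $ a * cnj (v $ a))"
  proof -
    have "dim_row (ketbra v) = n" unfolding ketbra_def using v by simp
    then show ?thesis unfolding mtrace_def using v by (intro sum.cong) (auto simp: ketbra_entry)
  qed
  also have "\<dots> = cinner v v" unfolding cinner_def using v by (intro sum.cong) (auto simp: mult.commute)
  finally show ?thesis using v1 by simp
qed

lemma wsum_pos:
  fixes w x :: "'a \<Rightarrow> real"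
  assumes K: "finite K" and w: "\<forall>k\<in>K. 0 \<le> w k" and x: "\<forall>k\<in>K. 0 < x k" and s1: "sum w K = 1"
  shows "0 < (\<Sum>k\<in>K. w k * x k)"
proof -
  have "\<exists>k\<in>K. w k \<noteq> 0" using s1 by (metis sum.neutral zero_neq_one)
  then obtain k0 where k0': "k0 \<in> K" "w k0 \<noteq> 0" by blast
  have "w k0 \<ge> 0" using w k0'(1) by blast
  then have wk0: "w k0 > 0" using k0' by auto
  have "w k0 * x k0 \<le> (\<Sum>k\<in>K. w k * x k)"
    using K k0' w x by (intro member_le_sum) (auto intro: mult_nonneg_nonneg less_imp_le)
  moreover have "w k0 * x k0 > 0" using wk0 x k0' by simp
  ultimately show ?thesis by simp
qed

lemma exp_bound:
  fixes r :: nat and p :: "nat \<Rightarrow> real"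
  assumes U: "unitary_mat n U" and rhoU: "\<rho> = U * rdiag n d * adj U"
    and rho: "\<rho> = lc n r (\<lambda>i. complex_of_real (p i)) \<sigma>"
    and ps: "\<forall>i<r. psd n (\<sigma> i)" and pp: "\<forall>i<r. 0 < p i" and i: "i < r"
    and tr: "mtrace (\<sigma> i) = 1" and rpsd: "psd n \<rho>"
  shows "exp (Re (mtrace (\<sigma> i * (U * rdiag n (ln_supp \<circ> d) * adj U)))) \<le> (\<Sum>k<n. d k * Re (Qf n U (\<sigma> i) k))"
proof -
  have Uc: "U \<in> carrier_mat n n" using U unfolding unitary_mat_def by simp
  have si: "\<sigma> i \<in> carrier_mat n n" using ps i unfolding psd_def by simp
  define w where "w k = Re (Qf n U (\<sigma> i) k)" for k
  define K where "K = {k \<in> {..<n}. d k \<noteq> 0}"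
  have dnn: "d k \<ge> 0" if "k < n" for k
  proof -
    have "0 \<le> Re (Qf n U \<rho> k)" by (rule psd_Qf_nonneg[OF rpsd Uc that])
    then show ?thesis using Qf_self[OF U that, of d] rhoU by simp
  qed
  have w0: "Qf n U (\<sigma> i) k = 0" if k: "k < n" and dk: "d k = 0" for k
  proof -
    have "Qf n U (\<sigma> i) k = cinner (col U k) (\<sigma> i *\<^sub>v col U k)" by (rule Qf_cinner[OF Uc si k])
    also have "\<sigma> i *\<^sub>v col U k = 0\<^sub>v n" by (rule zero_dir[OF U rhoU rho ps pp k dk i])
    also have "cinner (col U k) (0\<^sub>v n) = 0" unfolding cinner_def using Uc by simp
    finally show ?thesis .
  qed
  have wnn: "w k \<ge> 0" if "k < n" for k unfolding w_def by (rule psd_Qf_nonneg[OF _ Uc that]) (use ps i in simp)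
  have Ksub: "K \<subseteq> {..<n}" unfolding K_def by auto
  have finK: "finite K" unfolding K_def by simp
  have off: "\<forall>k\<in>{..<n} - K. w k = 0" unfolding K_def w_def using w0 by auto
  have sw: "(\<Sum>k<n. w k) = 1"
  proof -
    have "(\<Sum>k<n. w k) = Re (\<Sum>k<n. Qf n U (\<sigma> i) k)" unfolding w_def by (simp add: Re_sum)
    also have "\<dots> = 1" using Qf_trace[OF U si] tr by simp
    finally show ?thesis .
  qed
  have swK: "sum w K = 1"
    using sum.mono_neutral_left[OF _ Ksub off] sw by simp
  have "Re (mtrace (\<sigma> i * (U * rdiag n (ln_supp \<circ> d) * adj U))) = (\<Sum>k<n. ln_supp (d k) * w k)"
    unfolding trace_diag[OF Uc si] w_def by (simp add: Re_sum)
  also have "\<dots> = (\<Sum>k\<in>K. w k * ln (d k))"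
  proof -
    have "(\<Sum>k<n. ln_supp (d k) * w k) = (\<Sum>k\<in>K. ln_supp (d k) * w k)"
      using sum.mono_neutral_right[OF _ Ksub, of "\<lambda>k. ln_supp (d k) * w k"] off by simp
    also have "\<dots> = (\<Sum>k\<in>K. w k * ln (d k))"
      by (intro sum.cong refl) (auto simp: K_def ln_supp_def dnn less_le)
    finally show ?thesis .
  qed
  also have "\<dots> \<le> ln (\<Sum>k\<in>K. w k * d k)"
    by (rule jensen_ln[OF finK _ _ swK]) (auto simp: K_def wnn dnn less_le)
  finally have le: "Re (mtrace (\<sigma> i * (U * rdiag n (ln_supp \<circ> d) * adj U))) \<le> ln (\<Sum>k\<in>K. w k * d k)" .
  have pos: "0 < (\<Sum>k\<in>K. w k * d k)"
    by (rule wsum_pos[OF finK _ _ swK]) (auto simp: K_def wnn dnn less_le)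
  have eqK: "(\<Sum>k\<in>K. w k * d k) = (\<Sum>k<n. d k * Re (Qf n U (\<sigma> i) k))"
  proof -
    have "(\<Sum>k<n. w k * d k) = (\<Sum>k\<in>K. w k * d k)"
      using sum.mono_neutral_right[OF _ Ksub, of "\<lambda>k. w k * d k"] off by simp
    then show ?thesis unfolding w_def by (simp add: mult.commute)
  qed
  have "exp (Re (mtrace (\<sigma> i * (U * rdiag n (ln_supp \<circ> d) * adj U)))) \<le> exp (ln (\<Sum>k\<in>K. w k * d k))"
    using le by simp
  also have "\<dots> = (\<Sum>k\<in>K. w k * d k)" using pos by simp
  finally show ?thesis unfolding eqK .
qed

theorem corollary1:
  fixes n r :: nat
    and \<Phi> :: "complex mat \<Rightarrow> complex mat"
    and p :: "nat \<Rightarrow> real"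
    and v :: "nat \<Rightarrow> complex vec"
    and \<rho>_in \<rho>_out :: "complex mat"
  assumes channel: "quantum_channel n \<Phi>"
    and unit: "unital n \<Phi>"
    and vecs: "\<forall>i<r. v i \<in> carrier_vec n"
    and orthonormal: "\<forall>i<r. \<forall>j<r. cinner (v i) (v j) = (if i = j then 1 else 0)"
    and p_pos: "\<forall>i<r. 0 < p i \<and> p i \<le> 1"
    and p_sum: "(\<Sum>i<r. p i) = 1"
    and rho_in: "\<rho>_in = mat n n (\<lambda>(a, b). \<Sum>i<r. complex_of_real (p i) * ketbra (v i) $$ (a, b))"
    and rho_out: "\<rho>_out = \<Phi> \<rho>_in"
  shows "vN_entropy n \<rho>_out - vN_entropy n \<rho>_in
           \<ge> - ln (\<Sum>i<r. exp_neg (cross_entropy n (\<Phi> (ketbra (v i))) \<rho>_out))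
       \<and> - ln (\<Sum>i<r. exp_neg (cross_entropy n (\<Phi> (ketbra (v i))) \<rho>_out)) \<ge> 0"
proof -
  have lin: "Defs.linear_map n \<Phi>" and tp: "trace_preserving n \<Phi>"
    using channel unfolding quantum_channel_def by auto
  define X where "X i = ketbra (v i)" for i
  define \<sigma> where "\<sigma> i = \<Phi> (X i)" for i
  define c where "c i = complex_of_real (p i)" for i
  have cfun: "c = (\<lambda>i. complex_of_real (p i))" by (rule ext) (simp add: c_def)
  have Xfun: "X = (\<lambda>i. ketbra (v i))" by (rule ext) (simp add: X_def)
  have Xc: "\<forall>i<r. X i \<in> carrier_mat n n" unfolding X_def using vecs by simp
  have Xpsd: "\<forall>i<r. psd n (X i)" unfolding X_def using vecs psd_ketbra by simp
  have pp: "\<forall>i<r. 0 < p i" using p_pos by simp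
  have pnn: "\<forall>i<r. 0 \<le> p i" using p_pos by (simp add: less_imp_le)
  have rin: "\<rho>_in = lc n r c X" unfolding rho_in lc_def c_def X_def ..
  have rout: "\<rho>_out = lc n r c \<sigma>" unfolding rho_out rin \<sigma>_def by (rule Phi_lc[OF lin Xc])
  have spsd: "\<forall>i<r. psd n (\<sigma> i)" unfolding \<sigma>_def using psd_channel[OF channel] Xpsd by simp
  have sc: "\<forall>i<r. \<sigma> i \<in> carrier_mat n n" using spsd unfolding psd_def by simp
  have rin_psd: "psd n \<rho>_in" unfolding rin c_def by (rule psd_lc[OF Xpsd pnn])
  have rout_psd: "psd n \<rho>_out" unfolding rout c_def by (rule psd_lc[OF spsd pnn])
  have rinc: "\<rho>_in \<in> carrier_mat n n" and hin: "hermitian \<rho>_in" using rin_psd unfolding psd_def by auto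
  have routc: "\<rho>_out \<in> carrier_mat n n" and hout: "hermitian \<rho>_out" using rout_psd unfolding psd_def by auto
  have r0: "r > 0"
  proof (rule ccontr)
    assume "\<not> r > 0"
    then have "r = 0" by simp
    then show False using p_sum by simp
  qed
  have trX: "mtrace (X i) = 1" if "i < r" for i
  proof -
    have "v i \<in> carrier_vec n" "cinner (v i) (v i) = 1" using vecs orthonormal that by auto
    then show ?thesis unfolding X_def by (rule mtrace_ketbra)
  qed
  have trs: "mtrace (\<sigma> i) = 1" if "i < r" for i
    using tp Xc trX that unfolding \<sigma>_def trace_preserving_def by simp
  obtain U1 d1 where U1: "unitary_mat n U1" and rinU: "\<rho>_in = U1 * rdiag n d1 * adj U1"
    and L1: "mat_fun n ln_supp \<rho>_in = U1 * rdiag n (ln_supp \<circ> d1) * adj U1"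
    using mat_fun_spec[OF rinc hin] by blast
  obtain U d where U: "unitary_mat n U" and routU: "\<rho>_out = U * rdiag n d * adj U"
    and L: "mat_fun n ln_supp \<rho>_out = U * rdiag n (ln_supp \<circ> d) * adj U"
    using mat_fun_spec[OF routc hout] by blast
  have U1c: "U1 \<in> carrier_mat n n" using U1 unfolding unitary_mat_def by simp
  have Uc: "U \<in> carrier_mat n n" using U unfolding unitary_mat_def by simp
  define LL where "LL = mat_fun n ln_supp \<rho>_out"
  have LLc: "LL \<in> carrier_mat n n" unfolding LL_def L using Uc by simp
  have Sin: "vN_entropy n \<rho>_in = - (\<Sum>i<r. p i * ln (p i))"
  proof -
    have "mtrace (\<rho>_in * mat_fun n ln_supp \<rho>_in) = (\<Sum>k<n. complex_of_real ((ln_supp \<circ> d1) k) * Qf n U1 \<rho>_in k)"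
      unfolding L1 by (rule trace_diag[OF U1c rinc])
    also have "\<dots> = (\<Sum>k<n. complex_of_real (ln_supp (d1 k) * d1 k))"
      by (intro sum.cong refl) (use Qf_self[OF U1, of _ d1] rinU in simp)
    finally have "Re (mtrace (\<rho>_in * mat_fun n ln_supp \<rho>_in)) = (\<Sum>k<n. d1 k * ln_supp (d1 k))"
      by (simp add: Re_sum mult.commute)
    also have "\<dots> = (\<Sum>i<r. p i * ln_supp (p i))"
      by (rule entropy_in[OF vecs orthonormal U1]) (use rin rinU in \<open>simp add: cfun Xfun\<close>)
    also have "\<dots> = (\<Sum>i<r. p i * ln (p i))"
      using pp by (intro sum.cong refl) (simp add: ln_supp_def)
    finally show ?thesis unfolding vN_entropy_def by simp
  qed
  define C where "C i = - Re (mtrace (\<sigma> i * LL))" for i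
  have Sout: "vN_entropy n \<rho>_out = (\<Sum>i<r. p i * C i)"
  proof -
    have "mtrace (\<rho>_out * LL) = (\<Sum>i<r. c i * mtrace (\<sigma> i * LL))"
      unfolding rout by (rule mtrace_lc_mult[OF LLc sc])
    then show ?thesis unfolding vN_entropy_def LL_def[symmetric] C_def c_def
      by (simp add: Re_sum sum_negf)
  qed
  have suppi: "supp (\<sigma> i) \<subseteq> supp \<rho>_out" if "i < r" for i
    by (rule supp_incl[OF U routU _ spsd pp that]) (simp add: rout cfun)
  define a where "a i = exp (- C i)" for i
  have apos: "a i > 0" for i unfolding a_def by simp
  have sumA: "(\<Sum>i<r. exp_neg (cross_entropy n (\<Phi> (ketbra (v i))) \<rho>_out)) = (\<Sum>i<r. a i)"
  proof (intro sum.cong refl)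
    fix i assume "i \<in> {..<r}"
    then have "cross_entropy n (\<Phi> (ketbra (v i))) \<rho>_out = ereal (C i)"
      using suppi unfolding cross_entropy_def C_def LL_def \<sigma>_def X_def by simp
    then show "exp_neg (cross_entropy n (\<Phi> (ketbra (v i))) \<rho>_out) = a i"
      unfolding exp_neg_def a_def by simp
  qed
  have Apos: "(\<Sum>i<r. a i) > 0" using r0 apos by (intro sum_pos) auto
  have part1: "vN_entropy n \<rho>_out - vN_entropy n \<rho>_in \<ge> - ln (\<Sum>i<r. a i)"
  proof -
    have "(\<Sum>i<r. p i * ln (a i / p i)) \<le> ln (\<Sum>i<r. p i * (a i / p i))"
      by (rule jensen_ln) (use pp pnn apos p_sum in auto)
    also have "(\<Sum>i<r. p i * (a i / p i)) = (\<Sum>i<r. a i)"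
    proof (intro sum.cong refl)
      fix i assume "i \<in> {..<r}"
      then have "p i > 0" using pp by simp
      then show "p i * (a i / p i) = a i" by simp
    qed
    also have "(\<Sum>i<r. p i * ln (a i / p i)) = - (\<Sum>i<r. p i * C i) - (\<Sum>i<r. p i * ln (p i))"
    proof -
      have "(\<Sum>i<r. p i * ln (a i / p i)) = (\<Sum>i<r. - (p i * C i) - p i * ln (p i))"
        using pp apos by (intro sum.cong refl) (simp add: ln_divide_pos a_def algebra_simps)
      then show ?thesis by (simp add: sum_subtractf sum_negf)
    qed
    finally show ?thesis unfolding Sin Sout by simp
  qed
  have abound: "a i \<le> (\<Sum>k<n. d k * Re (Qf n U (\<sigma> i) k))" if i: "i < r" for i
  proof -
    have "a i = exp (Re (mtrace (\<sigma> i * (U * rdiag n (ln_supp \<circ> d) * adj U))))"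
      unfolding a_def C_def LL_def L by simp
    also have "\<dots> \<le> (\<Sum>k<n. d k * Re (Qf n U (\<sigma> i) k))"
      by (rule exp_bound[OF U routU _ spsd pp i trs[OF i] rout_psd]) (simp add: rout cfun)
    finally show ?thesis .
  qed
  define P where "P = lc n r (\<lambda>_. 1) X"
  have Pc: "P \<in> carrier_mat n n" unfolding P_def by simp
  have IPc: "1\<^sub>m n - P \<in> carrier_mat n n" using Pc by (rule minus_carrier_mat)
  have IPpsd: "psd n (1\<^sub>m n - P)" unfolding P_def X_def by (rule psd_IP[OF vecs orthonormal])
  have PhiIP: "psd n (\<Phi> (1\<^sub>m n - P))" by (rule psd_channel[OF channel IPpsd])
  have PhiP: "\<Phi> P = lc n r (\<lambda>_. 1) \<sigma>" unfolding P_def \<sigma>_def by (rule Phi_lc[OF lin Xc])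
  have Phi1: "\<Phi> (1\<^sub>m n) = \<Phi> (1\<^sub>m n - P) + \<Phi> P"
  proof -
    have "1\<^sub>m n = (1\<^sub>m n - P) + P" using Pc by (intro eq_matI) auto
    then have "\<Phi> (1\<^sub>m n) = \<Phi> ((1\<^sub>m n - P) + P)" by simp
    also have "\<dots> = \<Phi> (1\<^sub>m n - P) + \<Phi> P" using lin IPc Pc unfolding Defs.linear_map_def by simp
    finally show ?thesis .
  qed
  have PhiIPc: "\<Phi> (1\<^sub>m n - P) \<in> carrier_mat n n" using PhiIP unfolding psd_def by simp
  have PhiPc: "\<Phi> P \<in> carrier_mat n n" unfolding PhiP by simp
  have dnn: "d k \<ge> 0" if "k < n" for k
  proof -
    have "0 \<le> Re (Qf n U \<rho>_out k)" by (rule psd_Qf_nonneg[OF rout_psd Uc that])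
    then show ?thesis using Qf_self[OF U that, of d] routU by simp
  qed
  have qle: "(\<Sum>i<r. Re (Qf n U (\<sigma> i) k)) \<le> 1" if k: "k < n" for k
  proof -
    have "1 = Qf n U (1\<^sub>m n) k" using Qf_one[OF U k] by simp
    also have "\<dots> = Qf n U (\<Phi> (1\<^sub>m n - P)) k + Qf n U (\<Phi> P) k"
    proof -
      have "1\<^sub>m n = \<Phi> (1\<^sub>m n - P) + \<Phi> P" using unit Phi1 unfolding unital_def by simp
      then show ?thesis using Qf_add[OF PhiIPc PhiPc, of U k] by simp
    qed
    also have "Qf n U (\<Phi> P) k = (\<Sum>i<r. Qf n U (\<sigma> i) k)" unfolding PhiP Qf_lc by simp
    finally have E: "1 = Qf n U (\<Phi> (1\<^sub>m n - P)) k + (\<Sum>i<r. Qf n U (\<sigma> i) k)" .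
    have "1 = Re (Qf n U (\<Phi> (1\<^sub>m n - P)) k + (\<Sum>i<r. Qf n U (\<sigma> i) k))"
      by (subst E[symmetric]) simp
    then have "1 = Re (Qf n U (\<Phi> (1\<^sub>m n - P)) k) + (\<Sum>i<r. Re (Qf n U (\<sigma> i) k))"
      by (simp only: plus_complex.sel Re_sum)
    moreover have "0 \<le> Re (Qf n U (\<Phi> (1\<^sub>m n - P)) k)" by (rule psd_Qf_nonneg[OF PhiIP Uc k])
    ultimately show ?thesis by linarith
  qed
  have sumd: "(\<Sum>k<n. d k) = 1"
  proof -
    have "complex_of_real (\<Sum>k<n. d k) = (\<Sum>k<n. Qf n U \<rho>_out k)"
      using Qf_self[OF U, of _ d] routU by (simp add: of_real_sum)
    also have "\<dots> = mtrace \<rho>_out" by (rule Qf_trace[OF U routc])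
    also have "\<dots> = mtrace \<rho>_in" using tp rinc unfolding rho_out trace_preserving_def by simp
    also have "\<dots> = mtrace (\<rho>_in * 1\<^sub>m n)" using rinc by simp
    also have "\<dots> = (\<Sum>i<r. c i * mtrace (X i * 1\<^sub>m n))" unfolding rin by (rule mtrace_lc_mult[OF _ Xc]) simp
    also have "\<dots> = (\<Sum>i<r. c i)"
    proof (intro sum.cong refl)
      fix i assume "i \<in> {..<r}"
      then have "X i \<in> carrier_mat n n" "mtrace (X i) = 1" using Xc trX by auto
      then show "c i * mtrace (X i * 1\<^sub>m n) = c i" by simp
    qed
    also have "\<dots> = complex_of_real (\<Sum>i<r. p i)" unfolding c_def by (simp add: of_real_sum)
    finally show ?thesis using p_sum by (metis of_real_eq_1_iff)
  qed
  have part2: "(\<Sum>i<r. a i) \<le> 1"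
  proof -
    have "(\<Sum>i<r. a i) \<le> (\<Sum>i<r. \<Sum>k<n. d k * Re (Qf n U (\<sigma> i) k))"
      using abound by (intro sum_mono) simp
    also have "\<dots> = (\<Sum>k<n. d k * (\<Sum>i<r. Re (Qf n U (\<sigma> i) k)))"
      by (subst sum.swap) (simp add: sum_distrib_left)
    also have "\<dots> \<le> (\<Sum>k<n. d k * 1)"
      using dnn qle by (intro sum_mono mult_left_mono) auto
    also have "\<dots> = 1" using sumd by simp
    finally show ?thesis .
  qed
  have "- ln (\<Sum>i<r. a i) \<ge> 0" using part2 Apos by simp
  then show ?thesis using part1 unfolding sumA by simp
qed

end
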